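(* Let $P\subset\mathbb{R}^n$ be an $n$-dimensional smooth lattice polytope. Then (1) $\operatorname{codeg}(P)=\operatorname{codeg}_{\mathbb{Q}}(P)=\tau(P)=n+1$ if and only if $P=\Delta_n$; (2) if $P\neq\Delta_n$, then $\operatorname{codeg}_{\mathbb{Q}}(P)\le\tau(P)\le n$.
   Context: $\Delta_n$ denotes the standard $n$-dimensional simplex $\operatorname{Conv}\{0,e_1,\ldots,e_n\}$; lattice polytopes are considered up to lattice (affine unimodular) equivalence. Write $P=\bigcap_{i=1}^r\{x:\langle\rho_i,x\rangle\ge -a_i\}$ with primitive inner facet normals $\rho_i$ and $a_i\in\mathbb{Z}$; $P$ is smooth if each vertex lies on exactly $n$ facet hyperplanes whose normals form a basis of $\mathbb{Z}^n$. $P^{(s)}=\bigcap_i\{\langle\rho_i,x\rangle\ge -a_i+s\}$. For a vertex $m$ with $\{m\}=\bigcap_{i=1}^n\{\langle\rho_i,x\rangle=-a_i\}$, $m(s)$ is defined by $\{m(s)\}=\bigcap_{i=1}^n\{\langle\rho_i,x\rangle=-a_i+s\}$; $P$ is $s$-spanned if $m(s)\in P^{(s)}$ for all vertices $m$. $\operatorname{codeg}(P)=\min\{k\in\mathbb{N}:(kP)^{(1)}\cap\mathbb{Z}^n\ne\emptyset\}$; $\operatorname{codeg}_{\mathbb{Q}}(P)=\inf\{a/b:(aP)^{(b)}\neq\emptyset\}$; $\tau(P)=\inf\{a/b: aP\text{ is }b\text{-spanned}\}$ ($a,b$ positive integers). *)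

theory Defs
  imports "HOL-Analysis.Analysis"
begin

definition lattice_pts :: "(real^'n) set" where
  "lattice_pts = {x. \<forall>i. x $ i \<in> \<int>}"

definition lattice_polytope :: "(real^'n) set \<Rightarrow> bool" where
  "lattice_polytope P \<longleftrightarrow> (\<exists>V. finite V \<and> V \<subseteq> lattice_pts \<and> P = convex hull V)"

definition primitive_vec :: "real^'n \<Rightarrow> bool" where
  "primitive_vec r \<longleftrightarrow> r \<in> lattice_pts \<and> r \<noteq> 0 \<and>
     (\<forall>k::int. k \<noteq> 0 \<and> (\<forall>i. r $ i / of_int k \<in> \<int>) \<longrightarrow> \<bar>k\<bar> = 1)"

definition is_inner_normal :: "(real^'n) set \<Rightarrow> (real^'n) set \<Rightarrow> real^'n \<Rightarrow> bool" where
  "is_inner_normal P F r \<longleftrightarrow> primitive_vec r \<and>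
     (\<exists>c. (\<forall>x\<in>F. r \<bullet> x = c) \<and> (\<forall>x\<in>P. c \<le> r \<bullet> x))"

definition facet_normal :: "(real^'n) set \<Rightarrow> (real^'n) set \<Rightarrow> real^'n" where
  "facet_normal P F = (THE r. is_inner_normal P F r)"

text \<open>The value -a_F, i.e. the minimum of the normal functional on P.\<close>
definition facet_offset :: "(real^'n) set \<Rightarrow> (real^'n) set \<Rightarrow> real" where
  "facet_offset P F = Inf ((\<lambda>x. facet_normal P F \<bullet> x) ` P)"

definition shrink :: "(real^'n) set \<Rightarrow> real \<Rightarrow> (real^'n) set" where
  "shrink P s = {x. \<forall>F. F facet_of P \<longrightarrow> facet_offset P F + s \<le> facet_normal P F \<bullet> x}"

definition smooth_polytope :: "(real^'n) set \<Rightarrow> bool" where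
  "smooth_polytope P \<longleftrightarrow> (\<forall>v. v extreme_point_of P \<longrightarrow>
     (let S = {F. F facet_of P \<and> v \<in> F} in
        card S = CARD('n) \<and>
        (\<forall>z\<in>lattice_pts. \<exists>!c::(real^'n) set \<Rightarrow> int.
            (\<forall>F. F \<notin> S \<longrightarrow> c F = 0) \<and> z = (\<Sum>F\<in>S. of_int (c F) *\<^sub>R facet_normal P F))))"

definition s_spanned :: "(real^'n) set \<Rightarrow> real \<Rightarrow> bool" where
  "s_spanned P s \<longleftrightarrow> (\<forall>m. m extreme_point_of P \<longrightarrow>
     (\<forall>x. (\<forall>F. F facet_of P \<and> m \<in> F \<longrightarrow> facet_normal P F \<bullet> x = facet_offset P F + s)
          \<longrightarrow> x \<in> shrink P s))"

definition codeg :: "(real^'n) set \<Rightarrow> nat" where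
  "codeg P = (LEAST k::nat. k \<ge> 1 \<and> shrink ((\<lambda>x. real k *\<^sub>R x) ` P) 1 \<inter> lattice_pts \<noteq> {})"

definition codeg_Q :: "(real^'n) set \<Rightarrow> real" where
  "codeg_Q P = Inf {real a / real b | a b::nat. a > 0 \<and> b > 0 \<and>
                    shrink ((\<lambda>x. real a *\<^sub>R x) ` P) (real b) \<noteq> {}}"

definition tau :: "(real^'n) set \<Rightarrow> real" where
  "tau P = Inf {real a / real b | a b::nat. a > 0 \<and> b > 0 \<and>
                    s_spanned ((\<lambda>x. real a *\<^sub>R x) ` P) (real b)}"

definition std_simplex :: "(real^'n) set" where
  "std_simplex = convex hull (insert 0 {axis i 1 | i. True})"

definition lattice_equiv :: "(real^'n) set \<Rightarrow> (real^'n) set \<Rightarrow> bool" where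
  "lattice_equiv P Q \<longleftrightarrow> (\<exists>(A::real^'n^'n) t. (\<forall>i j. A $ i $ j \<in> \<int>) \<and> \<bar>det A\<bar> = 1 \<and>
      t \<in> lattice_pts \<and> Q = (\<lambda>x. A *v x + t) ` P)"

end

theory Submission
  imports Defs
begin


lemma lattice_pts_iff: "x \<in> lattice_pts \<longleftrightarrow> (\<forall>i. x $ i \<in> \<int>)"
  by (simp add: lattice_pts_def)

lemma lattice_add: "x \<in> lattice_pts \<Longrightarrow> y \<in> lattice_pts \<Longrightarrow> x + y \<in> lattice_pts"
  by (simp add: lattice_pts_def)

lemma lattice_diff: "x \<in> lattice_pts \<Longrightarrow> y \<in> lattice_pts \<Longrightarrow> x - y \<in> lattice_pts"
  by (simp add: lattice_pts_def)

lemma lattice_uminus: "x \<in> lattice_pts \<Longrightarrow> - x \<in> lattice_pts"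
  by (simp add: lattice_pts_def)

lemma lattice_zero: "0 \<in> lattice_pts"
  by (simp add: lattice_pts_def)

lemma lattice_scale: "x \<in> lattice_pts \<Longrightarrow> c \<in> \<int> \<Longrightarrow> c *\<^sub>R x \<in> lattice_pts"
  by (simp add: lattice_pts_def)

lemma lattice_scale_nat: "x \<in> lattice_pts \<Longrightarrow> real k *\<^sub>R x \<in> lattice_pts"
  by (simp add: lattice_pts_def)

lemma lattice_sum: "(\<And>i. i \<in> A \<Longrightarrow> f i \<in> lattice_pts) \<Longrightarrow> sum f A \<in> lattice_pts"
  by (induction A rule: infinite_finite_induct) (auto simp: lattice_zero lattice_add)

lemma lattice_axis: "axis i 1 \<in> lattice_pts"
  by (simp add: lattice_pts_def axis_def)

lemma inner_lattice: "x \<in> lattice_pts \<Longrightarrow> y \<in> lattice_pts \<Longrightarrow> x \<bullet> y \<in> \<int>"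
  by (auto simp: lattice_pts_def inner_vec_def intro!: Ints_sum Ints_mult)

lemma det_Ints:
  fixes A :: "real^'n^'n"
  assumes "\<And>i j. A$i$j \<in> \<int>"
  shows "det A \<in> \<int>"
  unfolding det_def
  by (auto intro!: Ints_sum Ints_mult Ints_prod assms simp: sign_def)

lemma prop_normal:
  fixes a r :: "'a::euclidean_space"
  assumes "a \<noteq> 0" "affine hull F = {x. a \<bullet> x = b}" "F \<noteq> {}" "\<And>x. x \<in> F \<Longrightarrow> r \<bullet> x = c"
  shows "\<exists>l. r = l *\<^sub>R a"
proof -
  have "affine hull F \<subseteq> {x. r \<bullet> x = c}"
    using assms(4) by (intro hull_minimal) (auto simp: affine_hyperplane)
  obtain x0 where x0: "x0 \<in> F" using assms(3) by auto
  define l where "l = (r \<bullet> a) / (a \<bullet> a)"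
  define w where "w = r - l *\<^sub>R a"
  have aw: "a \<bullet> w = 0"
    using assms(1) by (simp add: w_def l_def inner_diff_right inner_commute)
  have "a \<bullet> x0 = b" using x0 assms(2) hull_inc[of x0 F] by auto
  then have "x0 + w \<in> affine hull F" using assms(2) aw by (simp add: inner_add_right)
  then have "r \<bullet> (x0 + w) = c" using \<open>affine hull F \<subseteq> _\<close> by auto
  moreover have "r \<bullet> x0 = c" using assms(4) x0 by auto
  ultimately have rw: "r \<bullet> w = 0" by (simp add: inner_add_right)
  have "w \<bullet> w = 0"
    using rw aw by (simp add: w_def inner_diff_left inner_commute)
  then have "w = 0" by simp
  then show ?thesis by (auto simp: w_def)
qed

lemma Ints_div_dvd:
  assumes "(of_int a :: real) / of_int k \<in> \<int>" "k \<noteq> 0"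
  shows "k dvd a"
proof -
  obtain m where "(of_int a :: real) / of_int k = of_int m" using assms(1) Ints_cases by blast
  then have "(of_int a :: real) = of_int (k * m)" using assms(2) by (simp add: field_simps)
  then have "a = k * m" by linarith
  then show ?thesis by simp
qed

lemma vec_int_repr:
  assumes "r \<in> lattice_pts"
  obtains z :: "'n::finite \<Rightarrow> int" where "\<And>i. (r :: real^'n) $ i = of_int (z i)"
proof -
  have "\<forall>i. \<exists>z. r $ i = of_int z" using assms by (auto simp: lattice_pts_def elim!: Ints_cases)
  then obtain z where "\<forall>i. r $ i = of_int (z i)" by metis
  then show ?thesis using that by blast
qed

lemma primitivize:
  fixes r :: "real^'n"
  assumes "r \<in> lattice_pts" "r \<noteq> 0"
  shows "\<exists>\<mu>>0. primitive_vec (\<mu> *\<^sub>R r)"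
proof -
  obtain z where z: "\<And>i. r $ i = of_int (z i)" using vec_int_repr assms(1) by blast
  define g where "g = Gcd (range z)"
  obtain i0 where "r $ i0 \<noteq> 0" using assms(2) by (metis vec_eq_iff zero_index)
  then have "z i0 \<noteq> 0" using z by auto
  then have "g \<noteq> 0" unfolding g_def using Gcd_0_iff[of "range z"] by auto
  have "g \<ge> 0" unfolding g_def by simp
  then have gpos: "g > 0" using \<open>g \<noteq> 0\<close> by simp
  have gdvd: "g dvd z i" for i unfolding g_def by (simp add: Gcd_dvd)
  have comp: "((1 / of_int g) *\<^sub>R r) $ i = of_int (z i div g)" for i
  proof -
    obtain q where q: "z i = g * q" using gdvd by (meson dvdE)
    have "((1 / of_int g) *\<^sub>R r) $ i = of_int (z i) / of_int g" by (simp add: z)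
    also have "\<dots> = of_int q" using gpos by (simp add: q)
    also have "q = z i div g" using gpos q by simp
    finally show ?thesis .
  qed
  have "primitive_vec ((1 / of_int g) *\<^sub>R r)"
    unfolding primitive_vec_def
  proof (intro conjI allI impI)
    show "(1 / of_int g) *\<^sub>R r \<in> lattice_pts" unfolding lattice_pts_def using comp by auto
    show "(1 / real_of_int g) *\<^sub>R r \<noteq> 0" using gpos assms(2) by simp
    fix k :: int
    assume k: "k \<noteq> 0 \<and> (\<forall>i. ((1 / of_int g) *\<^sub>R r) $ i / of_int k \<in> \<int>)"
    have "(g * k) dvd z i" for i
    proof -
      have e: "((1 / of_int g) *\<^sub>R r) $ i / of_int k = of_int (z i) / of_int (g * k)"
        by (simp add: z)
      have "((1 / of_int g) *\<^sub>R r) $ i / of_int k \<in> \<int>" using k by blast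
      then have "(of_int (z i) :: real) / of_int (g * k) \<in> \<int>" by (simp only: e)
      moreover have "g * k \<noteq> 0" using k gpos by simp
      ultimately show ?thesis by (rule Ints_div_dvd)
    qed
    then have "\<And>b. b \<in> range z \<Longrightarrow> (g * k) dvd b" by blast
    then have "(g * k) dvd Gcd (range z)" by (rule Gcd_greatest)
    then have "(g * k) dvd (g * 1)" by (simp add: g_def)
    then have "k dvd 1" using gpos by (subst (asm) dvd_mult_cancel_left) auto
    then show "\<bar>k\<bar> = 1" by simp
  qed
  then show ?thesis using gpos by (intro exI[of _ "1 / of_int g"]) auto
qed

lemma primitive_unique_scale:
  fixes r :: "real^'n"
  assumes pr: "primitive_vec r" and pk: "primitive_vec (k *\<^sub>R r)" and "k > 0"
  shows "k = 1"
proof -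
  from pr have rl: "r \<in> lattice_pts" and "r \<noteq> 0" and
    prh: "\<And>k::int. k \<noteq> 0 \<Longrightarrow> (\<forall>i. r $ i / of_int k \<in> \<int>) \<Longrightarrow> \<bar>k\<bar> = 1"
    unfolding primitive_vec_def by blast+
  from pk have kl: "k *\<^sub>R r \<in> lattice_pts" and
    pkh: "\<And>k'::int. k' \<noteq> 0 \<Longrightarrow> (\<forall>i. (k *\<^sub>R r) $ i / of_int k' \<in> \<int>) \<Longrightarrow> \<bar>k'\<bar> = 1"
    unfolding primitive_vec_def by blast+
  obtain i0 where ri0: "r $ i0 \<noteq> 0" using \<open>r \<noteq> 0\<close> by (metis vec_eq_iff zero_index)
  have "k = (k * r $ i0) / r $ i0" using ri0 by simp
  moreover have "k * r$i0 \<in> \<int>" "r $ i0 \<in> \<int>"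
    using kl rl unfolding lattice_pts_def by auto
  then have "k * r$i0 \<in> \<rat>" "r $ i0 \<in> \<rat>" using Ints_subset_Rats by blast+
  ultimately have "k \<in> \<rat>" using Rats_divide by metis
  then obtain p q :: nat where q0: "q \<noteq> 0" and kpq: "\<bar>k\<bar> = real p / real q" and cop: "coprime p q"
    by (rule Rats_abs_nat_div_natE)
  have kpq': "k = real p / real q" using kpq \<open>k > 0\<close> by simp
  obtain z where z: "\<And>i. r $ i = of_int (z i)" using vec_int_repr rl by blast
  have qd: "int q dvd z i" for i
  proof -
    have "(k *\<^sub>R r) $ i \<in> \<int>" using kl by (simp add: lattice_pts_def)
    moreover have "(k *\<^sub>R r) $ i = of_int (int p * z i) / of_int (int q)" using z kpq' by simp
    ultimately have "int q dvd int p * z i" using q0 Ints_div_dvd[of "int p * z i" "int q"] by simp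
    moreover have "coprime (int q) (int p)" using cop by (simp add: coprime_commute)
    ultimately show ?thesis using coprime_dvd_mult_right_iff by blast
  qed
  have "\<forall>i. r $ i / of_int (int q) \<in> \<int>"
  proof
    fix i
    obtain m where "z i = int q * m" using qd by (meson dvdE)
    then show "r $ i / of_int (int q) \<in> \<int>" using q0 by (simp add: z)
  qed
  then have "\<bar>int q\<bar> = 1" using prh[of "int q"] q0 by simp
  then have "q = 1" by simp
  then have kp: "k = real p" using kpq' by simp
  have "p \<noteq> 0" using \<open>k > 0\<close> kp by auto
  have "(k *\<^sub>R r) $ i / of_int (int p) = r $ i" for i
    using \<open>p \<noteq> 0\<close> kp by simp
  then have "\<forall>i. (k *\<^sub>R r) $ i / of_int (int p) \<in> \<int>"
    using rl by (simp add: lattice_pts_def)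
  then have "\<bar>int p\<bar> = 1" using pkh[of "int p"] \<open>p \<noteq> 0\<close> by simp
  then show ?thesis using kp by simp
qed

lemma primitive_of_dual:
  fixes r u :: "real^'n"
  assumes "r \<in> lattice_pts" "u \<in> lattice_pts" "r \<bullet> u = 1 \<or> r \<bullet> u = -1"
  shows "primitive_vec r"
  unfolding primitive_vec_def
proof (intro conjI allI impI)
  show "r \<in> lattice_pts" by fact
  show "r \<noteq> 0" using assms(3) by auto
  fix k :: int
  assume k: "k \<noteq> 0 \<and> (\<forall>i. r $ i / of_int k \<in> \<int>)"
  have "(1 / of_int k) *\<^sub>R r \<in> lattice_pts" using k by (simp add: lattice_pts_def)
  then have "((1 / of_int k) *\<^sub>R r) \<bullet> u \<in> \<int>" using assms(2) by (rule inner_lattice)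
  then have "(of_int 1 :: real) / of_int k \<in> \<int> \<or> (of_int (-1) :: real) / of_int k \<in> \<int>"
    using assms(3) by auto
  then have "k dvd 1 \<or> k dvd -1" using k Ints_div_dvd[of 1 k] Ints_div_dvd[of "-1" k] by blast
  then show "\<bar>k\<bar> = 1" by auto
qed



locale lpoly =
  fixes P :: "(real^'n) set" and V :: "(real^'n) set"
  assumes finV: "finite V" and latV: "V \<subseteq> lattice_pts" and PV: "P = convex hull V"
    and full: "aff_dim P = int CARD('n)"
begin

lemma polytopeP: "polytope P" using finV PV by (auto simp: polytope_def)
lemma compactP: "compact P" using polytopeP polytope_imp_compact by blast
lemma convexP: "convex P" using polytopeP polytope_imp_convex by blast
lemma polyhedronP: "polyhedron P" using polytopeP polytope_imp_polyhedron by blast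
lemma P_ne: "P \<noteq> {}" using full by auto
lemma affP: "affine hull P = UNIV" using full aff_dim_eq_full[of P] by simp

lemma ext_lattice: "v extreme_point_of P \<Longrightarrow> v \<in> lattice_pts"
  using PV extreme_point_of_convex_hull latV by blast

lemma facet_aff_dim: "F facet_of P \<Longrightarrow> aff_dim F = int CARD('n) - 1"
  using full by (simp add: facet_of_def)

lemma facet_hyperplane:
  assumes F: "F facet_of P" and a: "a \<noteq> 0" and Fe: "F = P \<inter> {x. a \<bullet> x = b}"
  shows "affine hull F = {x. a \<bullet> x = b}"
proof (rule affine_dim_equal)
  show "affine (affine hull F)" by simp
  show "affine {x. a \<bullet> x = b}" by (simp add: affine_hyperplane)
  show "affine hull F \<noteq> {}" using F by (simp add: facet_of_def)
  show "affine hull F \<subseteq> {x. a \<bullet> x = b}"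
    using Fe by (intro hull_minimal) (auto simp: affine_hyperplane)
  show "aff_dim (affine hull F) = aff_dim {x. a \<bullet> x = b}"
    using facet_aff_dim[OF F] a by simp
qed

lemma not_sub_hyperplane:
  assumes "a \<noteq> 0"
  shows "\<not> P \<subseteq> {x. a \<bullet> x = b}"
proof
  assume "P \<subseteq> {x. a \<bullet> x = b}"
  then have "aff_dim P \<le> aff_dim {x. a \<bullet> x = b}" by (rule aff_dim_subset)
  then show False using assms full by simp
qed

lemma facet_ext_lattice:
  assumes "F facet_of P" "v extreme_point_of F"
  shows "v \<in> lattice_pts" "v \<in> F"
  using assms extreme_point_of_face[of F P v] ext_lattice facet_of_imp_face_of by blast+

lemma facet_has_lattice:
  assumes "F facet_of P"
  obtains v where "v \<in> F" "v \<in> lattice_pts"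
proof -
  have "compact F" using face_of_imp_compact[OF convexP compactP facet_of_imp_face_of[OF assms]] .
  moreover have "convex F" using face_of_imp_convex facet_of_imp_face_of[OF assms] by blast
  moreover have "F \<noteq> {}" using assms by (simp add: facet_of_def)
  ultimately obtain v where "v extreme_point_of F" using extreme_point_exists_convex by blast
  then show ?thesis using facet_ext_lattice[OF assms] that by blast
qed

lemma int_normal:
  assumes F: "F facet_of P"
  shows "\<exists>r c. r \<in> lattice_pts \<and> r \<noteq> 0 \<and> (\<forall>x\<in>F. r \<bullet> x = c)"
proof -
  have fF: "F face_of P" using F facet_of_imp_face_of by blast
  have cF: "compact F" using face_of_imp_compact[OF convexP compactP fF] .
  have vF: "convex F" using face_of_imp_convex fF by blast
  define E where "E = {x. x extreme_point_of F}"
  have FE: "F = convex hull E" unfolding E_def using Krein_Milman_Minkowski[OF cF vF] .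
  have EV: "E \<subseteq> V"
  proof
    fix x assume "x \<in> E"
    then have "x extreme_point_of P" using extreme_point_of_face[OF fF, of x] by (simp add: E_def)
    then show "x \<in> V" using PV extreme_point_of_convex_hull by metis
  qed
  obtain B where BE: "B \<subseteq> E" and Bi: "\<not> affine_dependent B" and BH: "affine hull E = affine hull B"
    using affine_basis_exists[of E] by blast
  have hFB: "affine hull F = affine hull B" using FE BH by simp
  have "B \<subseteq> V" using BE EV by (rule subset_trans)
  then have finB: "finite B" using finV by (rule finite_subset)
  have "aff_dim B = int CARD('n) - 1"
    using facet_aff_dim[OF F] aff_dim_affine_hull[of F] aff_dim_affine_hull[of B] hFB by simp
  moreover have "aff_dim B = int (card B) - 1" using aff_dim_affine_independent[OF Bi] by linarith
  ultimately have cardB: "card B = CARD('n)" by linarith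
  have "\<exists>w\<in>V. w \<notin> affine hull F"
  proof (rule ccontr)
    assume "\<not> ?thesis"
    then have "V \<subseteq> affine hull F" by blast
    then have "affine hull V \<subseteq> affine hull F"
      by (intro hull_minimal) auto
    then have "P \<subseteq> affine hull F"
      using PV convex_hull_subset_affine_hull[of V] by blast
    then have "aff_dim P \<le> aff_dim (affine hull F)" by (rule aff_dim_subset)
    then show False using full facet_aff_dim[OF F] by simp
  qed
  then obtain w where wV: "w \<in> V" and wH: "w \<notin> affine hull B" using hFB by blast
  have wB: "w \<notin> B" using wH hull_inc[of w B] by metis
  have Bwi: "\<not> affine_dependent (insert w B)" using affine_independent_insert[OF Bi wH] .
  have "\<exists>h. bij_betw h (UNIV::'n set) B"
    using finite_same_card_bij[of "UNIV::'n set" B] finB cardB by simp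
  then obtain \<sigma> where \<sigma>: "bij_betw \<sigma> (UNIV::'n set) B" by blast
  have \<sigma>B: "\<sigma> i \<in> B" for i using \<sigma> unfolding bij_betw_def by blast
  define M :: "real^'n^'n" where "M = (\<chi> i. \<sigma> i - w)"
  have Mrow: "M $ i = \<sigma> i - w" for i by (simp add: M_def)
  have lat\<sigma>: "\<sigma> i \<in> lattice_pts" for i using \<sigma>B[of i] \<open>B \<subseteq> V\<close> latV by blast
  have wl: "w \<in> lattice_pts" using wV latV by blast
  have Mint: "M $ i $ j \<in> \<int>" for i j
    using lattice_diff[OF lat\<sigma>[of i] wl] unfolding Mrow lattice_pts_def by blast
  have detM: "det M \<noteq> 0"
  proof
    assume d0: "det M = 0"
    then have "\<not> (\<exists>B'. M ** B' = mat 1)"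
      using invertible_det_nz[of M] invertible_right_inverse[of M] by simp
    then have "\<not> (\<forall>c. (\<Sum>i\<in>UNIV. c i *s row i M) = 0 \<longrightarrow> (\<forall>i. c i = 0))"
      using matrix_right_invertible_independent_rows[of M] by simp
    then obtain c i0 where c: "(\<Sum>i\<in>UNIV. c i *s row i M) = 0" and ci0: "c i0 \<noteq> 0"
      by blast
    have rowM: "row i M = \<sigma> i - w" for i unfolding row_def Mrow by (simp add: vec_lambda_eta)
    define U where "U = (\<lambda>q. if q = w then - (\<Sum>i\<in>UNIV. c i) else c (inv_into UNIV \<sigma> q))"
    have inv\<sigma>: "inv_into UNIV \<sigma> (\<sigma> i) = i" for i
      using \<sigma> unfolding bij_betw_def by (simp add: inv_into_f_f)
    have \<sigma>w: "\<sigma> i \<noteq> w" for i using wB \<sigma>B[of i] by metis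
    have Uw: "U w = - (\<Sum>i\<in>UNIV. c i)" by (simp add: U_def)
    have U\<sigma>: "U (\<sigma> i) = c i" for i using \<sigma>w[of i] inv\<sigma>[of i] by (simp add: U_def)
    have sB: "sum f B = (\<Sum>i\<in>UNIV. f (\<sigma> i))" for f :: "real^'n \<Rightarrow> 'b::comm_monoid_add"
      using sum.reindex_bij_betw[OF \<sigma>, of f] by simp
    have finI: "finite (insert w B)" using finB by simp
    have "affine_dependent (insert w B)"
      unfolding affine_dependent_explicit_finite[OF finI]
    proof (intro exI conjI)
      have "sum U (insert w B) = U w + sum U B" using wB finB by (simp add: sum.insert)
      also have "sum U B = (\<Sum>i\<in>UNIV. c i)" unfolding sB U\<sigma> ..
      finally show "sum U (insert w B) = 0" unfolding Uw by simp
      show "\<exists>v\<in>insert w B. U v \<noteq> 0"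
        using ci0 \<sigma>B[of i0] U\<sigma>[of i0] by (intro bexI[of _ "\<sigma> i0"]) auto
      have "(\<Sum>v\<in>insert w B. U v *\<^sub>R v) = U w *\<^sub>R w + (\<Sum>v\<in>B. U v *\<^sub>R v)"
        using wB finB by (simp add: sum.insert)
      also have "(\<Sum>v\<in>B. U v *\<^sub>R v) = (\<Sum>i\<in>UNIV. c i *\<^sub>R \<sigma> i)" unfolding sB U\<sigma> ..
      also have "U w *\<^sub>R w + (\<Sum>i\<in>UNIV. c i *\<^sub>R \<sigma> i) = (\<Sum>i\<in>UNIV. c i *\<^sub>R (\<sigma> i - w))"
        unfolding Uw by (simp add: scaleR_diff_right sum_subtractf scaleR_sum_left)
      also have "\<dots> = (\<Sum>i\<in>UNIV. c i *s row i M)"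
        unfolding rowM scalar_mult_eq_scaleR ..
      finally show "(\<Sum>v\<in>insert w B. U v *\<^sub>R v) = 0" using c by simp
    qed
    then show False using Bwi by blast
  qed
  obtain M' where MM': "M ** M' = mat 1"
    using detM invertible_det_nz[of M] invertible_right_inverse[of M] by blast
  define one :: "real^'n" where "one = (\<chi> i. 1)"
  define x0 where "x0 = M' *v one"
  have Mx0: "M *v x0 = one" unfolding x0_def by (simp add: matrix_vector_mul_assoc MM')
  define r where "r = det M *\<^sub>R x0"
  have rk: "r $ k = det (\<chi> i j. if j = k then one $ i else M $ i $ j)" for k
    using cramer_lemma[of k M x0] unfolding Mx0 by (simp add: r_def mult.commute)
  have rl: "r \<in> lattice_pts"
    unfolding lattice_pts_def using rk by (auto intro!: det_Ints simp: one_def Mint)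
  have Mr: "M *v r = det M *\<^sub>R one"
    by (simp add: r_def Mx0 matrix_vector_mult_scaleR)
  have rowr: "(\<sigma> i - w) \<bullet> r = det M" for i
  proof -
    have "(M *v r) $ i = det M" using Mr by (simp add: one_def)
    moreover have "(M *v r) $ i = M $ i \<bullet> r"
      by (simp add: matrix_vector_mult_def inner_vec_def)
    ultimately show ?thesis by (simp add: Mrow)
  qed
  have r0: "r \<noteq> 0"
  proof
    assume "r = 0"
    then have "det M *\<^sub>R one = 0" using Mr by simp
    then have "det M = 0" by (simp add: one_def vec_eq_iff)
    then show False using detM by simp
  qed
  have "\<forall>q\<in>B. r \<bullet> q = r \<bullet> w + det M"
  proof
    fix q assume "q \<in> B"
    then obtain i where "q = \<sigma> i" using \<sigma> by (auto simp: bij_betw_def)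
    then show "r \<bullet> q = r \<bullet> w + det M" using rowr[of i] by (simp add: inner_diff_left inner_diff_right inner_commute)
  qed
  then have "affine hull B \<subseteq> {x. r \<bullet> x = r \<bullet> w + det M}"
    by (intro hull_minimal) (auto simp: affine_hyperplane)
  then have "\<forall>x\<in>F. r \<bullet> x = r \<bullet> w + det M" using hFB hull_inc[of _ F] by blast
  then show ?thesis using rl r0 by blast
qed


lemma normal_sign:
  assumes F: "F facet_of P" and a: "a \<noteq> 0" and Psub: "P \<subseteq> {x. a \<bullet> x \<le> b}"
    and Fe: "F = P \<inter> {x. a \<bullet> x = b}"
    and r: "r \<noteq> 0" "\<forall>x\<in>F. r \<bullet> x = c" "\<forall>x\<in>P. c \<le> r \<bullet> x"
  shows "\<exists>\<mu>>0. r = (-\<mu>) *\<^sub>R a \<and> c = -\<mu> * b"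
proof -
  have hF: "affine hull F = {x. a \<bullet> x = b}" using facet_hyperplane[OF F a Fe] .
  have Fne: "F \<noteq> {}" using F by (simp add: facet_of_def)
  obtain l where rl: "r = l *\<^sub>R a" using prop_normal[OF a hF Fne] r(2) by blast
  obtain x0 where x0: "x0 \<in> F" using Fne by blast
  have ax0: "a \<bullet> x0 = b" using x0 Fe by blast
  have c: "c = l * b" using r(2) x0 ax0 rl by auto
  obtain p where pP: "p \<in> P" and "a \<bullet> p \<noteq> b" using not_sub_hyperplane[OF a, of b] by blast
  then have ap: "a \<bullet> p < b" using Psub by force
  have "c \<le> r \<bullet> p" using r(3) pP by blast
  then have "l * b \<le> l * (a \<bullet> p)" using c rl by simp
  then have "l * (b - a \<bullet> p) \<le> 0" by (simp add: algebra_simps)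
  then have "l \<le> 0" using ap by (simp add: mult_le_0_iff)
  moreover have "l \<noteq> 0" using r(1) rl by auto
  ultimately have "-l > 0" by simp
  then show ?thesis using rl c by (intro exI[of _ "-l"]) auto
qed

lemma normal_wrt:
  assumes F: "F facet_of P" and a: "a \<noteq> 0" and Psub: "P \<subseteq> {x. a \<bullet> x \<le> b}"
    and Fe: "F = P \<inter> {x. a \<bullet> x = b}"
  shows "\<exists>\<mu>>0. facet_normal P F = (-\<mu>) *\<^sub>R a \<and> facet_offset P F = -\<mu> * b
           \<and> primitive_vec (facet_normal P F)"
proof -
  have hF: "affine hull F = {x. a \<bullet> x = b}" using facet_hyperplane[OF F a Fe] .
  have Fne: "F \<noteq> {}" using F by (simp add: facet_of_def)
  obtain x0 where x0: "x0 \<in> F" using Fne by blast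
  have ax0: "a \<bullet> x0 = b" and x0P: "x0 \<in> P" using x0 Fe by blast+
  obtain r0 c0 where r0l: "r0 \<in> lattice_pts" and r00: "r0 \<noteq> 0" and rc: "\<forall>x\<in>F. r0 \<bullet> x = c0"
    using int_normal[OF F] by blast
  obtain l where rl: "r0 = l *\<^sub>R a" using prop_normal[OF a hF Fne] rc by blast
  have l0: "l \<noteq> 0" using r00 rl by auto
  define r1 where "r1 = (if l < 0 then r0 else - r0)"
  have r1l: "r1 \<in> lattice_pts" using r0l by (simp add: r1_def lattice_uminus)
  have r1a: "r1 = (- \<bar>l\<bar>) *\<^sub>R a" using rl by (simp add: r1_def)
  have r10: "r1 \<noteq> 0" using r00 by (simp add: r1_def)
  obtain \<mu>1 where \<mu>1: "\<mu>1 > 0" and pr: "primitive_vec (\<mu>1 *\<^sub>R r1)"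
    using primitivize[OF r1l r10] by blast
  define \<kappa> where "\<kappa> = \<mu>1 * \<bar>l\<bar>"
  have \<kappa>0: "\<kappa> > 0" using \<mu>1 l0 by (simp add: \<kappa>_def)
  define \<rho> where "\<rho> = \<mu>1 *\<^sub>R r1"
  have \<rho>a: "\<rho> = (-\<kappa>) *\<^sub>R a" by (simp add: \<rho>_def r1a \<kappa>_def)
  have onF: "\<forall>x\<in>F. \<rho> \<bullet> x = -\<kappa> * b" using Fe by (auto simp: \<rho>a)
  have onP: "\<forall>x\<in>P. -\<kappa> * b \<le> \<rho> \<bullet> x"
  proof
    fix x assume "x \<in> P"
    then have "a \<bullet> x \<le> b" using Psub by blast
    then show "-\<kappa> * b \<le> \<rho> \<bullet> x" using \<kappa>0 by (simp add: \<rho>a)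
  qed
  have inn: "is_inner_normal P F \<rho>"
    unfolding is_inner_normal_def using pr onF onP by (auto simp: \<rho>_def)
  have uniq: "r = \<rho>" if "is_inner_normal P F r" for r
  proof -
    from that obtain c where pr': "primitive_vec r" and c1: "\<forall>x\<in>F. r \<bullet> x = c" and c2: "\<forall>x\<in>P. c \<le> r \<bullet> x"
      unfolding is_inner_normal_def by blast
    have "r \<noteq> 0" using pr' by (simp add: primitive_vec_def)
    then obtain \<mu> where \<mu>: "\<mu> > 0" "r = (-\<mu>) *\<^sub>R a"
      using normal_sign[OF F a Psub Fe _ c1 c2] by blast
    have "r = (\<mu> / \<kappa>) *\<^sub>R \<rho>" using \<mu> \<kappa>0 by (simp add: \<rho>a)
    moreover have "\<mu> / \<kappa> > 0" using \<mu> \<kappa>0 by simp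
    moreover have "primitive_vec \<rho>" using pr by (simp add: \<rho>_def)
    ultimately have "\<mu> / \<kappa> = 1" using pr' primitive_unique_scale by metis
    then show ?thesis using \<open>r = (\<mu> / \<kappa>) *\<^sub>R \<rho>\<close> by simp
  qed
  have fn: "facet_normal P F = \<rho>"
    unfolding facet_normal_def using inn uniq by (rule the_equality)
  have fo: "facet_offset P F = -\<kappa> * b"
    unfolding facet_offset_def fn
  proof (rule cInf_eq_minimum)
    show "-\<kappa> * b \<in> (\<bullet>) \<rho> ` P" using x0P onF x0 by force
    show "\<And>y. y \<in> (\<bullet>) \<rho> ` P \<Longrightarrow> - \<kappa> * b \<le> y" using onP by blast
  qed
  show ?thesis using fn fo \<kappa>0 \<rho>a pr by (intro exI[of _ \<kappa>]) (auto simp: \<rho>_def)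
qed

lemma facet_props:
  assumes F: "F facet_of P"
  shows "primitive_vec (facet_normal P F)"
    and "\<And>x. x \<in> P \<Longrightarrow> facet_offset P F \<le> facet_normal P F \<bullet> x"
    and "\<And>x. x \<in> F \<Longrightarrow> facet_normal P F \<bullet> x = facet_offset P F"
    and "F = {x \<in> P. facet_normal P F \<bullet> x = facet_offset P F}"
    and "facet_offset P F \<in> \<int>"
proof -
  obtain a b where a: "a \<noteq> 0" and Ps: "P \<subseteq> {x. a \<bullet> x \<le> b}" and Fe: "F = P \<inter> {x. a \<bullet> x = b}"
    using facet_of_polyhedron[OF polyhedronP F] by blast
  obtain \<mu> where \<mu>: "\<mu> > 0" and fn: "facet_normal P F = (-\<mu>) *\<^sub>R a"
    and fo: "facet_offset P F = -\<mu> * b" and pr: "primitive_vec (facet_normal P F)"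
    using normal_wrt[OF F a Ps Fe] by blast
  show "primitive_vec (facet_normal P F)" by fact
  show "facet_offset P F \<le> facet_normal P F \<bullet> x" if "x \<in> P" for x
    using Ps that \<mu> by (auto simp: fn fo)
  have Fi: "x \<in> F \<longleftrightarrow> x \<in> P \<and> a \<bullet> x = b" for x using Fe by blast
  show xF: "facet_normal P F \<bullet> x = facet_offset P F" if "x \<in> F" for x
    using Fi[of x] that unfolding fn fo by simp
  show "F = {x \<in> P. facet_normal P F \<bullet> x = facet_offset P F}"
    using Fi \<mu> unfolding fn fo by auto
  obtain v where "v \<in> F" "v \<in> lattice_pts" using facet_has_lattice[OF F] by blast
  moreover have "facet_normal P F \<in> lattice_pts" using pr by (simp add: primitive_vec_def)
  ultimately show "facet_offset P F \<in> \<int>" using xF inner_lattice by metis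
qed

end



lemma lin_scale: "linear (\<lambda>x::real^'n. c *\<^sub>R x)"
  by (simp add: linear_scaleR)

lemma inj_scale: "c \<noteq> 0 \<Longrightarrow> inj (\<lambda>x::real^'n. c *\<^sub>R x)"
  by (simp add: inj_on_def)

lemma facet_of_scale:
  fixes P :: "(real^'n) set"
  assumes "c \<noteq> 0"
  shows "((\<lambda>x. c *\<^sub>R x) ` F) facet_of ((\<lambda>x. c *\<^sub>R x) ` P) \<longleftrightarrow> F facet_of P"
proof -
  have ad: "aff_dim ((\<lambda>x. c *\<^sub>R x) ` S) = aff_dim S" for S :: "(real^'n) set"
    by (rule aff_dim_injective_linear_image[OF lin_scale inj_scale[OF assms]])
  show ?thesis
    unfolding facet_of_def ad
    using face_of_linear_image[OF lin_scale inj_scale[OF assms], of F P] by simp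
qed

lemma facets_of_scale:
  fixes P :: "(real^'n) set"
  assumes "c \<noteq> 0"
  shows "G facet_of ((\<lambda>x. c *\<^sub>R x) ` P) \<longleftrightarrow> (\<exists>F. F facet_of P \<and> G = (\<lambda>x. c *\<^sub>R x) ` F)"
proof
  assume G: "G facet_of ((\<lambda>x. c *\<^sub>R x) ` P)"
  then have "G \<subseteq> (\<lambda>x. c *\<^sub>R x) ` P" by (rule facet_of_imp_subset)
  define F where "F = (\<lambda>x. (1/c) *\<^sub>R x) ` G"
  have GF: "G = (\<lambda>x. c *\<^sub>R x) ` F" unfolding F_def image_comp using assms by (simp add: o_def)
  then have "F facet_of P" using G facet_of_scale[OF assms, of F P] by simp
  then show "\<exists>F. F facet_of P \<and> G = (\<lambda>x. c *\<^sub>R x) ` F" using GF by blast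
next
  assume "\<exists>F. F facet_of P \<and> G = (\<lambda>x. c *\<^sub>R x) ` F"
  then show "G facet_of ((\<lambda>x. c *\<^sub>R x) ` P)" using facet_of_scale[OF assms] by blast
qed

lemma extreme_of_scale:
  fixes P :: "(real^'n) set"
  assumes "c \<noteq> 0"
  shows "(c *\<^sub>R m) extreme_point_of ((\<lambda>x. c *\<^sub>R x) ` P) \<longleftrightarrow> m extreme_point_of P"
  using face_of_linear_image[OF lin_scale inj_scale[OF assms], of "{m}" P]
  by (simp add: face_of_singleton)

lemma extremes_of_scale:
  fixes P :: "(real^'n) set"
  assumes "c \<noteq> 0"
  shows "m' extreme_point_of ((\<lambda>x. c *\<^sub>R x) ` P) \<longleftrightarrow> (\<exists>m. m extreme_point_of P \<and> m' = c *\<^sub>R m)"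
proof -
  have "m' = c *\<^sub>R ((1/c) *\<^sub>R m')" using assms by simp
  then show ?thesis using extreme_of_scale[OF assms] by metis
qed

lemma inner_normal_scale:
  fixes P :: "(real^'n) set"
  assumes "c > 0"
  shows "is_inner_normal ((\<lambda>x. c *\<^sub>R x) ` P) ((\<lambda>x. c *\<^sub>R x) ` F) r \<longleftrightarrow> is_inner_normal P F r"
proof
  assume "is_inner_normal ((\<lambda>x. c *\<^sub>R x) ` P) ((\<lambda>x. c *\<^sub>R x) ` F) r"
  then obtain d where pr: "primitive_vec r" and d1: "\<forall>x\<in>F. r \<bullet> (c *\<^sub>R x) = d"
    and d2: "\<forall>x\<in>P. d \<le> r \<bullet> (c *\<^sub>R x)"
    unfolding is_inner_normal_def by auto
  have "\<forall>x\<in>F. r \<bullet> x = d / c" using d1 assms by (auto simp: field_simps)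
  moreover have "\<forall>x\<in>P. d / c \<le> r \<bullet> x" using d2 assms by (auto simp: field_simps)
  ultimately show "is_inner_normal P F r" unfolding is_inner_normal_def using pr by blast
next
  assume "is_inner_normal P F r"
  then obtain d where pr: "primitive_vec r" and d1: "\<forall>x\<in>F. r \<bullet> x = d"
    and d2: "\<forall>x\<in>P. d \<le> r \<bullet> x"
    unfolding is_inner_normal_def by auto
  have "\<forall>y\<in>(\<lambda>x. c *\<^sub>R x) ` F. r \<bullet> y = c * d" using d1 by auto
  moreover have "\<forall>y\<in>(\<lambda>x. c *\<^sub>R x) ` P. c * d \<le> r \<bullet> y" using d2 assms by auto
  ultimately show "is_inner_normal ((\<lambda>x. c *\<^sub>R x) ` P) ((\<lambda>x. c *\<^sub>R x) ` F) r"
    unfolding is_inner_normal_def using pr by blast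
qed

lemma facet_normal_scale:
  fixes P :: "(real^'n) set"
  assumes "c > 0"
  shows "facet_normal ((\<lambda>x. c *\<^sub>R x) ` P) ((\<lambda>x. c *\<^sub>R x) ` F) = facet_normal P F"
  unfolding facet_normal_def inner_normal_scale[OF assms] ..

context lpoly
begin

lemma facet_rep: "P = {x. \<forall>F. F facet_of P \<longrightarrow> facet_offset P F \<le> facet_normal P F \<bullet> x}"
proof
  show "P \<subseteq> {x. \<forall>F. F facet_of P \<longrightarrow> facet_offset P F \<le> facet_normal P F \<bullet> x}"
    using facet_props(2) by blast
next
  obtain H where finH: "finite H" and seq: "P = affine hull P \<inter> \<Inter>H"
    and faces: "\<And>h. h \<in> H \<Longrightarrow> \<exists>a b. a \<noteq> 0 \<and> h = {x. a \<bullet> x \<le> b}"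
    and min: "\<And>F'. F' \<subset> H \<Longrightarrow> P \<subset> (affine hull P) \<inter> \<Inter>F'"
    using polyhedronP by (simp add: polyhedron_Int_affine_minimal) meson
  then obtain a b where ab: "\<And>h. h \<in> H \<Longrightarrow> a h \<noteq> 0 \<and> h = {x. a h \<bullet> x \<le> b h}"
    by metis
  have fac: "C facet_of P \<longleftrightarrow> (\<exists>h. h \<in> H \<and> C = P \<inter> {x. a h \<bullet> x = b h})" for C
    by (rule facet_of_polyhedron_explicit [OF finH seq ab min])
  show "{x. \<forall>F. F facet_of P \<longrightarrow> facet_offset P F \<le> facet_normal P F \<bullet> x} \<subseteq> P"
  proof
    fix x assume x: "x \<in> {x. \<forall>F. F facet_of P \<longrightarrow> facet_offset P F \<le> facet_normal P F \<bullet> x}"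
    have "x \<in> h" if h: "h \<in> H" for h
    proof -
      define C where "C = P \<inter> {x. a h \<bullet> x = b h}"
      have C: "C facet_of P" using fac h C_def by blast
      have Ps: "P \<subseteq> {x. a h \<bullet> x \<le> b h}" using seq h ab by blast
      obtain \<mu> where \<mu>: "\<mu> > 0" "facet_normal P C = (-\<mu>) *\<^sub>R a h" "facet_offset P C = -\<mu> * b h"
        using normal_wrt[OF C _ Ps C_def] ab[OF h] by blast
      have "facet_offset P C \<le> facet_normal P C \<bullet> x" using x C by blast
      then have "-\<mu> * b h \<le> -\<mu> * (a h \<bullet> x)" using \<mu> by simp
      then have "a h \<bullet> x \<le> b h" using \<mu>(1) by simp
      then show "x \<in> h" using ab[OF h] by blast
    qed
    then have "x \<in> \<Inter>H" by blast
    moreover have "x \<in> affine hull P" using affP by simp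
    ultimately show "x \<in> P" using seq by blast
  qed
qed

lemma finite_facets: "finite {F. F facet_of P}"
  using finite_polyhedron_facets[OF polyhedronP] .

lemma facet_offset_scale:
  assumes F: "F facet_of P" and c: "c > 0"
  shows "facet_offset ((\<lambda>x. c *\<^sub>R x) ` P) ((\<lambda>x. c *\<^sub>R x) ` F) = c * facet_offset P F"
  unfolding facet_offset_def facet_normal_scale[OF c]
proof (rule cInf_eq_minimum)
  obtain x0 where x0: "x0 \<in> F" using F by (auto simp: facet_of_def)
  then have "x0 \<in> P" using F facet_of_imp_subset by blast
  have "facet_normal P F \<bullet> x0 = facet_offset P F" using facet_props(3)[OF F x0] .
  then have "facet_normal P F \<bullet> (c *\<^sub>R x0) = c * Inf ((\<bullet>) (facet_normal P F) ` P)"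
    by (simp add: facet_offset_def)
  then show "c * Inf ((\<bullet>) (facet_normal P F) ` P) \<in> (\<bullet>) (facet_normal P F) ` (\<lambda>x. c *\<^sub>R x) ` P"
    using \<open>x0 \<in> P\<close> by (metis image_eqI)
  fix y assume "y \<in> (\<bullet>) (facet_normal P F) ` (\<lambda>x. c *\<^sub>R x) ` P"
  then obtain x where x: "x \<in> P" "y = facet_normal P F \<bullet> (c *\<^sub>R x)" by blast
  have "facet_offset P F \<le> facet_normal P F \<bullet> x" using facet_props(2)[OF F x(1)] .
  then show "c * Inf ((\<bullet>) (facet_normal P F) ` P) \<le> y" using x c by (simp add: facet_offset_def)
qed

end



locale spoly = lpoly P V for P :: "(real^'n) set" and V +
  assumes smooth: "smooth_polytope P"
begin

abbreviation "\<rho> F \<equiv> facet_normal P F"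
abbreviation "off F \<equiv> facet_offset P F"

definition SF :: "real^'n \<Rightarrow> (real^'n) set set" where
  "SF m = {F. F facet_of P \<and> m \<in> F}"

definition coef :: "real^'n \<Rightarrow> real^'n \<Rightarrow> (real^'n) set \<Rightarrow> int" where
  "coef m z = (THE c. (\<forall>F. F \<notin> SF m \<longrightarrow> c F = 0) \<and> z = (\<Sum>F\<in>SF m. of_int (c F) *\<^sub>R \<rho> F))"

definition uu :: "real^'n \<Rightarrow> (real^'n) set \<Rightarrow> real^'n" where
  "uu m F = (\<chi> i. of_int (coef m (axis i 1) F))"

lemma finite_SF: "finite (SF m)"
  using finite_facets by (rule finite_subset[rotated]) (auto simp: SF_def)

context
  fixes m assumes m: "m extreme_point_of P"
begin

lemma smooth_at: "card (SF m) = CARD('n) \<and> (\<forall>z\<in>lattice_pts. \<exists>!c::(real^'n) set \<Rightarrow> int.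
   (\<forall>F. F \<notin> SF m \<longrightarrow> c F = 0) \<and> z = (\<Sum>F\<in>SF m. of_int (c F) *\<^sub>R \<rho> F))"
proof -
  have "let S = {F. F facet_of P \<and> m \<in> F} in card S = CARD('n) \<and>
        (\<forall>z\<in>lattice_pts. \<exists>!c::(real^'n) set \<Rightarrow> int.
            (\<forall>F. F \<notin> S \<longrightarrow> c F = 0) \<and> z = (\<Sum>F\<in>S. of_int (c F) *\<^sub>R facet_normal P F))"
    using smooth m unfolding smooth_polytope_def by (elim allE impE)
  then show ?thesis unfolding Let_def SF_def .
qed

lemma card_SF: "card (SF m) = CARD('n)"
  using smooth_at by (rule conjunct1)

lemma basis_SF: "z \<in> lattice_pts \<Longrightarrow> \<exists>!c::(real^'n) set \<Rightarrow> int.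
   (\<forall>F. F \<notin> SF m \<longrightarrow> c F = 0) \<and> z = (\<Sum>F\<in>SF m. of_int (c F) *\<^sub>R \<rho> F)"
  using smooth_at by blast

lemma coef_prop:
  assumes "z \<in> lattice_pts"
  shows "\<forall>F. F \<notin> SF m \<longrightarrow> coef m z F = 0" "z = (\<Sum>F\<in>SF m. of_int (coef m z F) *\<^sub>R \<rho> F)"
  using theI'[OF basis_SF[OF assms]] unfolding coef_def by blast+

lemma coef_unique:
  assumes "z \<in> lattice_pts" "\<forall>F. F \<notin> SF m \<longrightarrow> c F = 0" "z = (\<Sum>F\<in>SF m. of_int (c F) *\<^sub>R \<rho> F)"
  shows "c = coef m z"
  using basis_SF[OF assms(1)] coef_prop[OF assms(1)] assms(2,3) by blast

lemma axis_exp: "axis i 1 = (\<Sum>F\<in>SF m. of_int (coef m (axis i 1) F) *\<^sub>R \<rho> F)"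
  using coef_prop(2)[OF lattice_axis] .

lemma uu_lattice: "uu m F \<in> lattice_pts"
  by (simp add: uu_def lattice_pts_def)

lemma rho_lattice: "F facet_of P \<Longrightarrow> \<rho> F \<in> lattice_pts"
  using facet_props(1) by (simp add: primitive_vec_def)

lemma inner_uu: "v \<bullet> uu m F = (\<Sum>i\<in>UNIV. v $ i * of_int (coef m (axis i 1) F))"
  by (simp add: inner_vec_def uu_def)

lemma expand1: "w = (\<Sum>F\<in>SF m. (\<rho> F \<bullet> w) *\<^sub>R uu m F)"
proof -
  have "w $ i = (\<Sum>F\<in>SF m. (\<rho> F \<bullet> w) * of_int (coef m (axis i 1) F))" for i
  proof -
    have "w $ i = axis i 1 \<bullet> w" by (simp add: inner_axis')
    also have "\<dots> = (\<Sum>F\<in>SF m. of_int (coef m (axis i 1) F) * (\<rho> F \<bullet> w))"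
      by (subst axis_exp) (simp add: inner_sum_left)
    finally show ?thesis by (simp add: mult.commute)
  qed
  then show ?thesis by (simp add: vec_eq_iff sum_component uu_def)
qed

lemma dual_int: "F facet_of P \<Longrightarrow> \<rho> F \<bullet> uu m G \<in> \<int>"
  using inner_lattice[OF rho_lattice uu_lattice] .

lemma dual:
  assumes G: "G \<in> SF m" and F: "F \<in> SF m"
  shows "\<rho> G \<bullet> uu m F = (if G = F then 1 else 0)"
proof -
  have Gf: "G facet_of P" using G by (simp add: SF_def)
  have Gl: "\<rho> G \<in> lattice_pts" using rho_lattice[OF Gf] .
  define c1 where "c1 = (\<lambda>F'. if F' \<in> SF m then \<lfloor>\<rho> G \<bullet> uu m F'\<rfloor> else 0)"
  define c2 where "c2 = (\<lambda>F'::(real^'n) set. if F' = G then (1::int) else 0)"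
  have ci: "of_int (c1 F') = \<rho> G \<bullet> uu m F'" if "F' \<in> SF m" for F'
    using dual_int[OF Gf, of F'] that by (simp add: c1_def)
  have "\<rho> G = (\<Sum>F'\<in>SF m. (\<rho> G \<bullet> uu m F') *\<^sub>R \<rho> F')"
  proof -
    have "(\<Sum>F'\<in>SF m. (\<rho> G \<bullet> uu m F') *\<^sub>R \<rho> F') $ k = \<rho> G $ k" for k
    proof -
      have "(\<Sum>F'\<in>SF m. (\<rho> G \<bullet> uu m F') *\<^sub>R \<rho> F') $ k
          = (\<Sum>F'\<in>SF m. (\<Sum>i\<in>UNIV. \<rho> G $ i * of_int (coef m (axis i 1) F')) * \<rho> F' $ k)"
        by (simp add: sum_component inner_uu)
      also have "\<dots> = (\<Sum>i\<in>UNIV. \<rho> G $ i * (\<Sum>F'\<in>SF m. of_int (coef m (axis i 1) F') * \<rho> F' $ k))"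
        by (simp add: sum_distrib_left sum_distrib_right sum.swap[of _ "SF m"] mult.assoc)
      also have "\<dots> = (\<Sum>i\<in>UNIV. \<rho> G $ i * (axis i 1 :: real^'n) $ k)"
      proof (rule sum.cong[OF refl])
        fix i
        have "(axis i 1 :: real^'n) $ k = (\<Sum>F'\<in>SF m. of_int (coef m (axis i 1) F') *\<^sub>R \<rho> F') $ k"
          using axis_exp[of i] by simp
        then show "\<rho> G $ i * (\<Sum>F'\<in>SF m. of_int (coef m (axis i 1) F') * \<rho> F' $ k) = \<rho> G $ i * axis i 1 $ k"
          by (simp add: sum_component)
      qed
      also have "\<dots> = \<rho> G $ k" by (simp add: axis_def if_distrib[of "\<lambda>x. _ * x"] sum.delta cong: if_cong)
      finally show ?thesis .
    qed
    then show ?thesis by (simp add: vec_eq_iff)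
  qed
  then have e1: "\<rho> G = (\<Sum>F'\<in>SF m. of_int (c1 F') *\<^sub>R \<rho> F')"
    by (metis (no_types, lifting) ci sum.cong)
  have "(\<Sum>F'\<in>SF m. of_int (c2 F') *\<^sub>R \<rho> F') = (\<Sum>F'\<in>SF m. if F' = G then \<rho> F' else 0)"
    by (rule sum.cong) (auto simp: c2_def)
  also have "\<dots> = \<rho> G" using G finite_SF[of m] by (simp add: sum.delta')
  finally have e2: "\<rho> G = (\<Sum>F'\<in>SF m. of_int (c2 F') *\<^sub>R \<rho> F')" by simp
  have "c1 = coef m (\<rho> G)" using coef_unique[OF Gl _ e1] by (simp add: c1_def)
  moreover have "c2 = coef m (\<rho> G)" using coef_unique[OF Gl _ e2] G by (auto simp: c2_def)
  ultimately have "c1 F = c2 F" by simp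
  then show ?thesis using ci[OF F] by (cases "G = F") (auto simp: c2_def)
qed

lemma expand2: "v = (\<Sum>F\<in>SF m. (v \<bullet> uu m F) *\<^sub>R \<rho> F)"
proof -
  define D where "D = v - (\<Sum>F\<in>SF m. (v \<bullet> uu m F) *\<^sub>R \<rho> F)"
  have Du: "D \<bullet> uu m G = 0" if G: "G \<in> SF m" for G
  proof -
    have "(\<Sum>F\<in>SF m. (v \<bullet> uu m F) *\<^sub>R \<rho> F) \<bullet> uu m G = (\<Sum>F\<in>SF m. (v \<bullet> uu m F) * (if F = G then 1 else 0))"
      by (simp add: inner_sum_left dual[OF _ G])
    also have "\<dots> = (\<Sum>F\<in>SF m. if F = G then v \<bullet> uu m F else 0)"
      by (rule sum.cong) auto
    also have "\<dots> = v \<bullet> uu m G" using G finite_SF[of m] by (simp add: sum.delta')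
    finally show ?thesis by (simp add: D_def inner_diff_left)
  qed
  have "D \<bullet> D = (\<Sum>F\<in>SF m. (\<rho> F \<bullet> D) * (uu m F \<bullet> D))"
    by (subst (1) expand1[of D]) (simp add: inner_sum_left)
  also have "\<dots> = 0" using Du by (simp add: inner_commute)
  finally have "D = 0" by simp
  then show ?thesis by (simp add: D_def)
qed

lemma off_at_m: "F \<in> SF m \<Longrightarrow> \<rho> F \<bullet> m = off F"
  using facet_props(3) by (auto simp: SF_def)

lemma m_in_P: "m \<in> P" using m extreme_point_of_def by blast

lemma m_lattice: "m \<in> lattice_pts" using ext_lattice[OF m] .

lemma gap:
  assumes G: "G facet_of P" "m \<notin> G"
  shows "\<rho> G \<bullet> m - off G \<ge> 1" "\<rho> G \<bullet> m - off G \<in> \<int>"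
proof -
  show gi: "\<rho> G \<bullet> m - off G \<in> \<int>"
    using inner_lattice[OF rho_lattice[OF G(1)] m_lattice] facet_props(5)[OF G(1)] by (rule Ints_diff)
  have "\<rho> G \<bullet> m \<ge> off G" using facet_props(2)[OF G(1) m_in_P] .
  moreover have "\<rho> G \<bullet> m \<noteq> off G" using G facet_props(4)[OF G(1)] m_in_P by blast
  ultimately have "\<rho> G \<bullet> m - off G > 0" by simp
  moreover obtain z where "\<rho> G \<bullet> m - off G = of_int z" using gi by (rule Ints_cases)
  ultimately show "\<rho> G \<bullet> m - off G \<ge> 1" by simp
qed

end

end



lemma Ints_pos_ge1: "(x::real) \<in> \<int> \<Longrightarrow> x > 0 \<Longrightarrow> x \<ge> 1"
  by (erule Ints_cases) simp

lemma Ints_nonneg_lt1: "(x::real) \<in> \<int> \<Longrightarrow> x \<ge> 0 \<Longrightarrow> x < 1 \<Longrightarrow> x = 0"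
  by (erule Ints_cases) simp

context lpoly
begin
lemma facet_rep_mem:
  assumes "\<And>G. G facet_of P \<Longrightarrow> facet_offset P G \<le> facet_normal P G \<bullet> x"
  shows "x \<in> P"
proof -
  have "x \<in> {x. \<forall>F. F facet_of P \<longrightarrow> facet_offset P F \<le> facet_normal P F \<bullet> x}" using assms by blast
  moreover have "{x. \<forall>F. F facet_of P \<longrightarrow> facet_offset P F \<le> facet_normal P F \<bullet> x} \<subseteq> P"
    using facet_rep by (rule equalityD2)
  ultimately show ?thesis by blast
qed
end

context spoly
begin

context
  fixes m assumes m: "m extreme_point_of P"
begin

lemma SF_facet: "F \<in> SF m \<Longrightarrow> F facet_of P" by (simp add: SF_def)

lemma edge:
  assumes F: "F \<in> SF m"
  shows "m + uu m F \<in> P"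
proof -
  have Ff: "F facet_of P" using F by (rule SF_facet)
  have uF: "\<rho> F \<bullet> uu m F = 1" using dual[OF m F F] by simp
  define u where "u = uu m F"
  define K where "K = 1 + (\<Sum>G\<in>{G. G facet_of P}. \<bar>\<rho> G \<bullet> u\<bar>)"
  have K1: "K \<ge> 1" unfolding K_def by (simp add: sum_nonneg)
  have Kb: "\<bar>\<rho> G \<bullet> u\<bar> \<le> K - 1" if "G facet_of P" for G
    unfolding K_def using member_le_sum[of G "{G. G facet_of P}" "\<lambda>G. \<bar>\<rho> G \<bullet> u\<bar>"] finite_facets that
    by simp
  define t0 where "t0 = 1 / K"
  have t0: "t0 > 0" "t0 \<le> 1" using K1 by (auto simp: t0_def)
  define y0 where "y0 = m + t0 *\<^sub>R u"
  have y0P: "y0 \<in> P"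
  proof (rule facet_rep_mem)
    fix G assume G: "G facet_of P"
    show "off G \<le> \<rho> G \<bullet> y0"
    proof (cases "m \<in> G")
      case True
      then have GS: "G \<in> SF m" using G by (simp add: SF_def)
      have "\<rho> G \<bullet> y0 = off G + t0 * (if G = F then 1 else 0)"
        using off_at_m[OF m GS] dual[OF m GS F] by (simp add: y0_def u_def inner_add_right)
      then show ?thesis using t0 by simp
    next
      case False
      have g: "\<rho> G \<bullet> m - off G \<ge> 1" using gap[OF m G False] by simp
      have "t0 * \<bar>\<rho> G \<bullet> u\<bar> \<le> t0 * (K - 1)" using Kb[OF G] t0 by (intro mult_left_mono) auto
      also have "\<dots> \<le> 1" using K1 by (simp add: t0_def field_simps)
      finally have tb: "t0 * \<bar>\<rho> G \<bullet> u\<bar> \<le> 1" .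
      moreover have "- (t0 * (\<rho> G \<bullet> u)) \<le> t0 * \<bar>\<rho> G \<bullet> u\<bar>" using t0 by (simp add: abs_if)
      ultimately have "- (t0 * (\<rho> G \<bullet> u)) \<le> 1" by linarith
      then show ?thesis using g by (simp add: y0_def inner_add_right)
    qed
  qed
  define E where "E = P \<inter> \<Inter>(SF m - {F})"
  have Eface: "E face_of P"
  proof (cases "SF m - {F} = {}")
    case True
    then show ?thesis using face_of_refl[OF convexP] unfolding E_def True by simp
  next
    case False
    have "\<Inter>(SF m - {F}) face_of P"
      using False by (intro face_of_Inter) (auto simp: SF_def facet_of_imp_face_of)
    moreover have "\<Inter>(SF m - {F}) \<subseteq> P"
      using False by (auto simp: SF_def dest: facet_of_imp_subset)
    ultimately show ?thesis by (simp add: E_def Int_absorb1)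
  qed
  have line: "x = m + (\<rho> F \<bullet> (x - m)) *\<^sub>R u" if xE: "x \<in> E" for x
  proof -
    have "x - m = (\<Sum>G\<in>SF m. (\<rho> G \<bullet> (x - m)) *\<^sub>R uu m G)" by (rule expand1[OF m])
    also have "\<dots> = (\<Sum>G\<in>SF m. if G = F then (\<rho> G \<bullet> (x - m)) *\<^sub>R uu m G else 0)"
    proof (rule sum.cong[OF refl])
      fix G assume GS: "G \<in> SF m"
      show "(\<rho> G \<bullet> (x - m)) *\<^sub>R uu m G = (if G = F then (\<rho> G \<bullet> (x - m)) *\<^sub>R uu m G else 0)"
      proof (cases "G = F")
        case False
        then have "x \<in> G" using xE GS by (auto simp: E_def)
        then have "\<rho> G \<bullet> x = off G" using facet_props(3)[OF SF_facet[OF GS]] by blast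
        then have "\<rho> G \<bullet> (x - m) = 0" using off_at_m[OF m GS] by (simp add: inner_diff_right)
        then show ?thesis using False by simp
      qed simp
    qed
    also have "\<dots> = (\<rho> F \<bullet> (x - m)) *\<^sub>R u" using F finite_SF[of m] by (simp add: sum.delta' u_def)
    finally show ?thesis by (simp add: algebra_simps)
  qed
  have y0E: "y0 \<in> E"
  proof -
    have "y0 \<in> G" if GS: "G \<in> SF m - {F}" for G
    proof -
      have "\<rho> G \<bullet> y0 = off G"
        using off_at_m[OF m, of G] dual[OF m, of G F] GS F by (simp add: y0_def u_def inner_add_right)
      then show ?thesis using facet_props(4)[OF SF_facet, of G] GS y0P by blast
    qed
    then show ?thesis using y0P by (auto simp: E_def)
  qed
  have cE: "compact E" using face_of_imp_compact[OF convexP compactP Eface] .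
  have vE: "convex E" using face_of_imp_convex[OF Eface] .
  have u0: "u \<noteq> 0" using uF by (auto simp: u_def)
  have "\<exists>x1. x1 extreme_point_of E \<and> x1 \<noteq> m"
  proof (rule ccontr)
    assume "\<not> ?thesis"
    then have "{x. x extreme_point_of E} \<subseteq> {m}" by blast
    then have "E \<subseteq> convex hull {m}"
      using Krein_Milman_Minkowski[OF cE vE] hull_mono by blast
    then have "y0 = m" using y0E by auto
    then show False using t0 u0 by (simp add: y0_def)
  qed
  then obtain x1 where x1: "x1 extreme_point_of E" "x1 \<noteq> m" by blast
  have x1E: "x1 \<in> E" using x1 extreme_point_of_def by blast
  have x1P: "x1 extreme_point_of P" using extreme_point_of_face[OF Eface] x1(1) by blast
  have x1l: "x1 \<in> lattice_pts" using ext_lattice[OF x1P] .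
  define T where "T = \<rho> F \<bullet> (x1 - m)"
  have x1eq: "x1 = m + T *\<^sub>R u" using line[OF x1E] by (simp add: T_def)
  have "x1 \<in> P" using x1P extreme_point_of_def by blast
  then have "T \<ge> 0" using facet_props(2)[OF Ff] off_at_m[OF m F]
    by (simp add: T_def inner_diff_right)
  moreover have "T \<noteq> 0" using x1(2) x1eq by auto
  moreover have "T \<in> \<int>" unfolding T_def
    using inner_lattice[OF rho_lattice[OF m Ff] lattice_diff[OF x1l m_lattice[OF m]]] .
  ultimately have T1: "T \<ge> 1" using Ints_pos_ge1 by simp
  have "(1 - 1/T) *\<^sub>R m + (1/T) *\<^sub>R x1 \<in> P"
    using convexP m_in_P[OF m] \<open>x1 \<in> P\<close> T1
    by (intro convexD) (auto simp: field_simps)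
  moreover have "(1 - 1/T) *\<^sub>R m + (1/T) *\<^sub>R x1 = m + u"
    using T1 by (simp add: x1eq algebra_simps)
  ultimately show ?thesis by (simp add: u_def)
qed


lemma vertex_ineq:
  assumes G: "G facet_of P" "m \<notin> G" and k: "k \<ge> CARD('n)"
  shows "real k * off G + 1 \<le> \<rho> G \<bullet> (real k *\<^sub>R m + (\<Sum>F\<in>SF m. uu m F))
         \<or> (k = CARD('n) \<and> (\<forall>F\<in>SF m. \<rho> G \<bullet> uu m F = -(\<rho> G \<bullet> m - off G)))"
proof -
  define d where "d = \<rho> G \<bullet> m - off G"
  have d1: "d \<ge> 1" and dI: "d \<in> \<int>" using gap[OF m G] by (simp_all add: d_def)
  define c where "c F = \<rho> G \<bullet> uu m F" for F
  have cd: "c F + d \<ge> 0" if F: "F \<in> SF m" for F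
  proof -
    have "off G \<le> \<rho> G \<bullet> (m + uu m F)" using facet_props(2)[OF G(1) edge[OF F]] .
    then show ?thesis by (simp add: c_def d_def inner_add_right)
  qed
  have cI: "c F \<in> \<int>" for F unfolding c_def using dual_int[OF m G(1)] .
  define val where "val = \<rho> G \<bullet> (real k *\<^sub>R m + (\<Sum>F\<in>SF m. uu m F)) - real k * off G"
  have e1: "\<rho> G \<bullet> (real k *\<^sub>R m + (\<Sum>F\<in>SF m. uu m F)) = real k * (\<rho> G \<bullet> m) + (\<Sum>F\<in>SF m. c F)"
    by (simp add: inner_add_right inner_sum_right c_def)
  have e2: "(\<Sum>F\<in>SF m. c F + d) = (\<Sum>F\<in>SF m. c F) + real CARD('n) * d"
    by (simp add: sum.distrib card_SF[OF m])
  have "val = real k * d + (\<Sum>F\<in>SF m. c F)"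
    unfolding val_def e1 d_def by (simp add: right_diff_distrib)
  also have "\<dots> = (real k - real CARD('n)) * d + (\<Sum>F\<in>SF m. c F + d)"
    unfolding e2 by (simp add: left_diff_distrib)
  finally have val: "val = (real k - real CARD('n)) * d + (\<Sum>F\<in>SF m. c F + d)" .
  have t1: "(real k - real CARD('n)) * d \<ge> 0" using k d1 by simp
  have t2: "(\<Sum>F\<in>SF m. c F + d) \<ge> 0" using cd by (simp add: sum_nonneg)
  have kn: "real k - real CARD('n) \<in> \<int>" by (intro Ints_diff Ints_of_nat)
  have sI: "(\<Sum>F\<in>SF m. c F + d) \<in> \<int>" by (intro Ints_sum Ints_add cI dI)
  have valI: "val \<in> \<int>"
    unfolding val by (intro Ints_add Ints_mult kn dI sI)
  show ?thesis
  proof (cases "val \<ge> 1")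
    case True
    have "real k * off G + 1 \<le> \<rho> G \<bullet> (real k *\<^sub>R m + (\<Sum>F\<in>SF m. uu m F))"
      using True unfolding val_def by linarith
    then show ?thesis by (rule disjI1)
  next
    case False
    have "val \<ge> 0" using t1 t2 val by linarith
    then have "val = 0" using Ints_nonneg_lt1[OF valI] False by linarith
    then have z1: "(real k - real CARD('n)) * d = 0" and z2: "(\<Sum>F\<in>SF m. c F + d) = 0"
      using t1 t2 val by linarith+
    have "real k - real CARD('n) = 0" using z1 d1 by simp
    then have "k = CARD('n)" by simp
    moreover have "\<forall>F\<in>SF m. c F + d = 0"
      using z2 cd sum_nonneg_eq_0_iff[OF finite_SF[of m], of "\<lambda>F. c F + d"] by blast
    then have "\<forall>F\<in>SF m. \<rho> G \<bullet> uu m F = -(\<rho> G \<bullet> m - off G)"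
      unfolding c_def d_def by (auto simp: algebra_simps)
    ultimately show ?thesis by (intro disjI2 conjI)
  qed
qed

lemma simplex_case:
  assumes G: "G facet_of P" "m \<notin> G" and cG: "\<forall>F\<in>SF m. \<rho> G \<bullet> uu m F = -(\<rho> G \<bullet> m - off G)"
  shows "\<forall>x\<in>P. (\<Sum>F\<in>SF m. \<rho> F \<bullet> (x - m)) \<le> 1"
proof -
  define d where "d = \<rho> G \<bullet> m - off G"
  have d1: "d \<ge> 1" and dI: "d \<in> \<int>" using gap[OF m G] by (simp_all add: d_def)
  define w where "w = (\<Sum>F\<in>SF m. \<rho> F)"
  have wl: "w \<in> lattice_pts" unfolding w_def
  proof (rule lattice_sum)
    fix F assume "F \<in> SF m"
    then show "\<rho> F \<in> lattice_pts" using rho_lattice[OF m SF_facet] by blast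
  qed
  have "\<rho> G = (\<Sum>F\<in>SF m. (\<rho> G \<bullet> uu m F) *\<^sub>R \<rho> F)" by (rule expand2[OF m])
  also have "\<dots> = (\<Sum>F\<in>SF m. (-d) *\<^sub>R \<rho> F)"
    by (rule sum.cong[OF refl]) (simp add: cG d_def)
  also have "\<dots> = (-d) *\<^sub>R w" unfolding w_def by (rule scaleR_sum_right[symmetric])
  finally have \<rho>G: "\<rho> G = (-d) *\<^sub>R w" .
  obtain dz where dz: "d = of_int dz" using dI by (rule Ints_cases)
  have dz0: "dz \<noteq> 0" using d1 dz by auto
  have "\<rho> G $ i / of_int dz \<in> \<int>" for i
  proof -
    have "\<rho> G $ i / of_int dz = - (w $ i)" using \<rho>G dz dz0 by simp
    moreover have "w $ i \<in> \<int>" using wl by (simp add: lattice_pts_def)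
    ultimately show ?thesis by simp
  qed
  then have "\<bar>dz\<bar> = 1" using facet_props(1)[OF G(1)] dz0 unfolding primitive_vec_def by blast
  then have dd: "d = 1" using d1 dz by simp
  show ?thesis
  proof
    fix x assume "x \<in> P"
    then have "off G \<le> \<rho> G \<bullet> x" using facet_props(2)[OF G(1)] by blast
    have dG: "\<rho> G \<bullet> m - off G = 1" using dd by (simp add: d_def)
    have "\<rho> G \<bullet> x - \<rho> G \<bullet> m \<ge> - 1" using dG \<open>off G \<le> \<rho> G \<bullet> x\<close> by linarith
    then have "- (w \<bullet> x) + w \<bullet> m \<ge> - 1" unfolding \<rho>G dd by simp
    then have "w \<bullet> (x - m) \<le> 1" by (simp add: inner_diff_right)
    then show "(\<Sum>F\<in>SF m. \<rho> F \<bullet> (x - m)) \<le> 1" by (simp add: w_def inner_sum_left)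
  qed
qed

end

end



lemma std_basis: "{axis i 1 | i. True} = (Basis :: (real^'n) set)"
  by (auto simp: Basis_vec_def)

lemma range_axis: "range (\<lambda>i. axis i 1) = (Basis :: (real^'n) set)"
  by (auto simp: Basis_vec_def)

lemma inj_axis: "inj (\<lambda>i::'n. (axis i 1 :: real^'n))"
  by (auto simp: inj_on_def axis_eq_axis)

lemma sum_basis: "(\<Sum>b\<in>(Basis::(real^'n) set). f b) = (\<Sum>i\<in>UNIV. f (axis i 1))"
proof -
  have "(\<Sum>b\<in>range (\<lambda>i::'n. (axis i 1 :: real^'n)). f b) = (\<Sum>i\<in>UNIV. f (axis i 1))"
    using sum.reindex[OF inj_axis, of f] by (simp add: o_def)
  then show ?thesis by (simp add: range_axis)
qed

lemma std_char: "(y::real^'n) \<in> std_simplex \<longleftrightarrow> (\<forall>i. 0 \<le> y$i) \<and> (\<Sum>i\<in>UNIV. y$i) \<le> 1"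
proof -
  have "y \<in> std_simplex \<longleftrightarrow> (\<forall>i\<in>Basis. 0 \<le> y \<bullet> i) \<and> (\<Sum>i\<in>Basis. y \<bullet> i) \<le> 1"
    unfolding std_simplex_def std_basis std_simplex by simp
  also have "(\<Sum>i\<in>Basis. y \<bullet> i) = (\<Sum>i\<in>UNIV. y $ i)"
    by (simp add: sum_basis inner_axis)
  also have "(\<forall>i\<in>Basis. 0 \<le> y \<bullet> i) \<longleftrightarrow> (\<forall>i. 0 \<le> y$i)"
    by (auto simp: Basis_vec_def inner_axis)
  finally show ?thesis .
qed

lemma std_lattice:
  assumes y: "(y::real^'n) \<in> std_simplex" "y \<in> lattice_pts"
  shows "y \<in> insert 0 Basis"
proof (cases "\<forall>i. y $ i = 0")
  case True
  then have "y = 0" by (simp add: vec_eq_iff)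
  then show ?thesis by simp
next
  case False
  then obtain j where j: "y $ j \<noteq> 0" by blast
  have nn: "\<forall>i. 0 \<le> y$i" and s1: "(\<Sum>i\<in>UNIV. y$i) \<le> 1" using y(1) std_char by blast+
  have yI: "y $ i \<in> \<int>" for i using y(2) by (simp add: lattice_pts_def)
  have "y $ j > 0" using nn[rule_format, of j] j by linarith
  then have yj: "y $ j \<ge> 1" using Ints_pos_ge1[OF yI[of j]] by blast
  have "(\<Sum>i\<in>UNIV. y$i) = y $ j + (\<Sum>i\<in>UNIV - {j}. y$i)"
    by (simp add: sum.remove)
  moreover have "(\<Sum>i\<in>UNIV - {j}. y$i) \<ge> 0" using nn by (simp add: sum_nonneg)
  ultimately have yj1: "y $ j = 1" and rest: "(\<Sum>i\<in>UNIV - {j}. y$i) = 0"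
    using s1 yj by linarith+
  have "\<forall>i\<in>UNIV - {j}. y $ i = 0" using rest nn sum_nonneg_eq_0_iff[of "UNIV - {j}" "\<lambda>i. y$i"] by simp
  then have "y = axis j 1" using yj1 by (auto simp: vec_eq_iff axis_def)
  then show ?thesis by simp
qed

lemma card_insert_0_Basis: "card (insert (0::real^'n) Basis) = Suc CARD('n)"
  by (simp add: card_insert_if)

context lpoly
begin

lemma shrink_scale:
  assumes c: "c > 0"
  shows "x \<in> shrink ((\<lambda>x. c *\<^sub>R x) ` P) s \<longleftrightarrow>
         (\<forall>F. F facet_of P \<longrightarrow> c * facet_offset P F + s \<le> facet_normal P F \<bullet> x)"
proof -
  have c0: "c \<noteq> 0" using c by simp
  show ?thesis
  proof -
    have "x \<in> shrink ((\<lambda>x. c *\<^sub>R x) ` P) s \<longleftrightarrow> (\<forall>G. G facet_of ((\<lambda>x. c *\<^sub>R x) ` P) \<longrightarrow>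
       facet_offset ((\<lambda>x. c *\<^sub>R x) ` P) G + s \<le> facet_normal ((\<lambda>x. c *\<^sub>R x) ` P) G \<bullet> x)"
      unfolding shrink_def by simp
    also have "\<dots> \<longleftrightarrow> (\<forall>F. F facet_of P \<longrightarrow>
       facet_offset ((\<lambda>x. c *\<^sub>R x) ` P) ((\<lambda>x. c *\<^sub>R x) ` F) + s \<le> facet_normal ((\<lambda>x. c *\<^sub>R x) ` P) ((\<lambda>x. c *\<^sub>R x) ` F) \<bullet> x)"
      unfolding facets_of_scale[OF c0] by blast
    also have "\<dots> \<longleftrightarrow> (\<forall>F. F facet_of P \<longrightarrow> c * facet_offset P F + s \<le> facet_normal P F \<bullet> x)"
    proof -
      have "F facet_of P \<Longrightarrow> (facet_offset ((\<lambda>x. c *\<^sub>R x) ` P) ((\<lambda>x. c *\<^sub>R x) ` F) + s \<le> facet_normal ((\<lambda>x. c *\<^sub>R x) ` P) ((\<lambda>x. c *\<^sub>R x) ` F) \<bullet> x)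
        \<longleftrightarrow> c * facet_offset P F + s \<le> facet_normal P F \<bullet> x" for F
        using facet_normal_scale[OF c, of P F] facet_offset_scale[of F c] c by simp
      then show ?thesis by blast
    qed
    finally show ?thesis .
  qed
qed

lemma spanned_scale:
  assumes c: "c > 0"
  shows "s_spanned ((\<lambda>x. c *\<^sub>R x) ` P) s \<longleftrightarrow>
    (\<forall>m. m extreme_point_of P \<longrightarrow> (\<forall>x. (\<forall>F. F facet_of P \<and> m \<in> F \<longrightarrow>
        facet_normal P F \<bullet> x = c * facet_offset P F + s) \<longrightarrow> x \<in> shrink ((\<lambda>x. c *\<^sub>R x) ` P) s))"
proof -
  define Q where "Q = (\<lambda>x. c *\<^sub>R x) ` P"
  have c0: "c \<noteq> 0" using c by simp
  have memsc: "c *\<^sub>R m \<in> (\<lambda>x. c *\<^sub>R x) ` F \<longleftrightarrow> m \<in> F" for m :: "real^'n" and F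
  proof
    assume "c *\<^sub>R m \<in> (\<lambda>x. c *\<^sub>R x) ` F"
    then obtain y where "y \<in> F" "c *\<^sub>R m = c *\<^sub>R y" by blast
    then have "m = y" using c0 by (metis scaleR_left_imp_eq)
    then show "m \<in> F" using \<open>y \<in> F\<close> by simp
  next
    assume "m \<in> F"
    then show "c *\<^sub>R m \<in> (\<lambda>x. c *\<^sub>R x) ` F" by (rule imageI)
  qed
  have e: "F facet_of P \<Longrightarrow> (facet_normal Q ((\<lambda>x. c *\<^sub>R x) ` F) \<bullet> x = facet_offset Q ((\<lambda>x. c *\<^sub>R x) ` F) + s)
        \<longleftrightarrow> facet_normal P F \<bullet> x = c * facet_offset P F + s" for F x
  proof -
    assume F: "F facet_of P"
    have n: "facet_normal Q ((\<lambda>x. c *\<^sub>R x) ` F) = facet_normal P F"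
      unfolding Q_def by (rule facet_normal_scale[OF c])
    have o: "facet_offset Q ((\<lambda>x. c *\<^sub>R x) ` F) = c * facet_offset P F"
      unfolding Q_def by (rule facet_offset_scale[OF F c])
    show ?thesis unfolding n o ..
  qed
  have hyp: "(\<forall>F'. F' facet_of Q \<and> c *\<^sub>R m \<in> F' \<longrightarrow> facet_normal Q F' \<bullet> x = facet_offset Q F' + s)
     \<longleftrightarrow> (\<forall>F. F facet_of P \<and> m \<in> F \<longrightarrow> facet_normal P F \<bullet> x = c * facet_offset P F + s)" for m x
  proof
    assume h: "\<forall>F'. F' facet_of Q \<and> c *\<^sub>R m \<in> F' \<longrightarrow> facet_normal Q F' \<bullet> x = facet_offset Q F' + s"
    show "\<forall>F. F facet_of P \<and> m \<in> F \<longrightarrow> facet_normal P F \<bullet> x = c * facet_offset P F + s"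
    proof (intro allI impI)
      fix F assume F: "F facet_of P \<and> m \<in> F"
      have "((\<lambda>x. c *\<^sub>R x) ` F) facet_of Q" using F facet_of_scale[OF c0, of F P] by (simp add: Q_def)
      moreover have "c *\<^sub>R m \<in> (\<lambda>x. c *\<^sub>R x) ` F" using F by blast
      ultimately have "facet_normal Q ((\<lambda>x. c *\<^sub>R x) ` F) \<bullet> x = facet_offset Q ((\<lambda>x. c *\<^sub>R x) ` F) + s"
        using h by blast
      then show "facet_normal P F \<bullet> x = c * facet_offset P F + s" using e F by blast
    qed
  next
    assume h: "\<forall>F. F facet_of P \<and> m \<in> F \<longrightarrow> facet_normal P F \<bullet> x = c * facet_offset P F + s"
    show "\<forall>F'. F' facet_of Q \<and> c *\<^sub>R m \<in> F' \<longrightarrow> facet_normal Q F' \<bullet> x = facet_offset Q F' + s"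
    proof (intro allI impI)
      fix F' assume F': "F' facet_of Q \<and> c *\<^sub>R m \<in> F'"
      then obtain F where F: "F facet_of P" and FF: "F' = (\<lambda>x. c *\<^sub>R x) ` F"
        using facets_of_scale[OF c0, of F' P] by (auto simp: Q_def)
      have "m \<in> F" using F' FF memsc by blast
      then have "facet_normal P F \<bullet> x = c * facet_offset P F + s" using h F by blast
      then show "facet_normal Q F' \<bullet> x = facet_offset Q F' + s" using e[OF F] FF by blast
    qed
  qed
  show ?thesis
  proof
    assume sp: "s_spanned ((\<lambda>x. c *\<^sub>R x) ` P) s"
    show "\<forall>m. m extreme_point_of P \<longrightarrow> (\<forall>x. (\<forall>F. F facet_of P \<and> m \<in> F \<longrightarrow>
        facet_normal P F \<bullet> x = c * facet_offset P F + s) \<longrightarrow> x \<in> shrink ((\<lambda>x. c *\<^sub>R x) ` P) s)"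
    proof (intro allI impI)
      fix m x assume m: "m extreme_point_of P"
        and hx: "\<forall>F. F facet_of P \<and> m \<in> F \<longrightarrow> facet_normal P F \<bullet> x = c * facet_offset P F + s"
      have "(c *\<^sub>R m) extreme_point_of Q" unfolding Q_def by (rule extreme_of_scale[OF c0, THEN iffD2, OF m])
      moreover have "\<forall>F'. F' facet_of Q \<and> c *\<^sub>R m \<in> F' \<longrightarrow> facet_normal Q F' \<bullet> x = facet_offset Q F' + s"
        using hyp hx by blast
      ultimately show "x \<in> shrink ((\<lambda>x. c *\<^sub>R x) ` P) s"
        using sp unfolding s_spanned_def Q_def by blast
    qed
  next
    assume h: "\<forall>m. m extreme_point_of P \<longrightarrow> (\<forall>x. (\<forall>F. F facet_of P \<and> m \<in> F \<longrightarrow>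
        facet_normal P F \<bullet> x = c * facet_offset P F + s) \<longrightarrow> x \<in> shrink ((\<lambda>x. c *\<^sub>R x) ` P) s)"
    show "s_spanned ((\<lambda>x. c *\<^sub>R x) ` P) s"
      unfolding s_spanned_def
    proof (intro allI impI)
      fix m' x assume m': "m' extreme_point_of (\<lambda>x. c *\<^sub>R x) ` P"
        and hx: "\<forall>F. F facet_of (\<lambda>x. c *\<^sub>R x) ` P \<and> m' \<in> F \<longrightarrow>
          facet_normal ((\<lambda>x. c *\<^sub>R x) ` P) F \<bullet> x = facet_offset ((\<lambda>x. c *\<^sub>R x) ` P) F + s"
      obtain m where m: "m extreme_point_of P" and mm: "m' = c *\<^sub>R m"
        using m' extremes_of_scale[OF c0] by blast
      have "\<forall>F. F facet_of P \<and> m \<in> F \<longrightarrow> facet_normal P F \<bullet> x = c * facet_offset P F + s"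
        using hyp[of m x] hx mm by (simp add: Q_def)
      then show "x \<in> shrink ((\<lambda>x. c *\<^sub>R x) ` P) s" using h m by blast
    qed
  qed
qed

end



context spoly
begin

context
  fixes m assumes m: "m extreme_point_of P"
begin

lemma SF_bij: "\<exists>\<sigma>. bij_betw \<sigma> (UNIV::'n set) (SF m)"
  using finite_same_card_bij[of "UNIV::'n set" "SF m"] finite_SF card_SF[OF m] by simp

lemma uu_inj: "inj_on (uu m) (SF m)"
proof (rule inj_onI)
  fix F G assume F: "F \<in> SF m" and G: "G \<in> SF m" and e: "uu m F = uu m G"
  have "\<rho> F \<bullet> uu m F = 1" using dual[OF m F F] by simp
  then have "\<rho> F \<bullet> uu m G = 1" using e by simp
  then show "F = G" using dual[OF m F G] by (simp split: if_splits)
qed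

lemma simplex_equiv:
  assumes sx: "\<forall>x\<in>P. (\<Sum>F\<in>SF m. \<rho> F \<bullet> (x - m)) \<le> 1"
  shows "lattice_equiv P std_simplex"
proof -
  obtain \<sigma> where \<sigma>: "bij_betw \<sigma> (UNIV::'n set) (SF m)" using SF_bij by blast
  have \<sigma>S: "\<sigma> i \<in> SF m" for i using \<sigma> unfolding bij_betw_def by blast
  have \<sigma>inj: "\<sigma> i = \<sigma> j \<longleftrightarrow> i = j" for i j using \<sigma> unfolding bij_betw_def inj_on_def by blast
  have sS: "(\<Sum>F\<in>SF m. f F) = (\<Sum>i\<in>UNIV. f (\<sigma> i))" for f :: "(real^'n) set \<Rightarrow> real"
    using sum.reindex_bij_betw[OF \<sigma>, of f] by simp
  define A :: "real^'n^'n" where "A = (\<chi> i. \<rho> (\<sigma> i))"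
  define B :: "real^'n^'n" where "B = (\<chi> i j. uu m (\<sigma> j) $ i)"
  have Ai: "A $ i = \<rho> (\<sigma> i)" for i by (simp add: A_def)
  have Av: "(A *v x) $ i = \<rho> (\<sigma> i) \<bullet> x" for x i
    by (simp add: matrix_vector_mult_def inner_vec_def A_def)
  have AB: "A ** B = mat 1"
  proof -
    have "(A ** B) $ i $ j = (mat 1 :: real^'n^'n) $ i $ j" for i j
    proof -
      have "(A ** B) $ i $ j = \<rho> (\<sigma> i) \<bullet> uu m (\<sigma> j)"
        by (simp add: matrix_matrix_mult_def inner_vec_def A_def B_def)
      also have "\<dots> = (if i = j then 1 else 0)" using dual[OF m \<sigma>S \<sigma>S] \<sigma>inj by simp
      finally show ?thesis by (simp add: mat_def)
    qed
    then show ?thesis by (simp add: vec_eq_iff)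
  qed
  have AI: "A $ i $ j \<in> \<int>" for i j
    using rho_lattice[OF m SF_facet[OF m \<sigma>S]] by (simp add: A_def lattice_pts_def)
  have BI: "B $ i $ j \<in> \<int>" for i j
    using uu_lattice[OF m] by (simp add: B_def lattice_pts_def)
  have "det A * det B = 1" using det_mul[of A B] AB by simp
  moreover obtain a where a: "det A = of_int a" using det_Ints[OF AI] by (rule Ints_cases)
  moreover obtain b where "det B = of_int b" using det_Ints[OF BI] by (rule Ints_cases)
  ultimately have "a * b = 1" by (metis of_int_1 of_int_eq_iff of_int_mult)
  then have "\<bar>a\<bar> = 1" using zmult_eq_1_iff by auto
  then have detA: "\<bar>det A\<bar> = 1" using a by simp
  define t where "t = - (A *v m)"
  have tl: "t \<in> lattice_pts"
    using inner_lattice[OF rho_lattice[OF m SF_facet[OF m \<sigma>S]] m_lattice[OF m]]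
    by (simp add: t_def lattice_pts_def Av)
  have ft': "(A *v x) $ i + t $ i = \<rho> (\<sigma> i) \<bullet> (x - m)" for x i
    by (simp add: t_def Av inner_diff_right)
  have ft: "(A *v x + t) $ i = \<rho> (\<sigma> i) \<bullet> (x - m)" for x i
    using ft' by simp
  have "std_simplex = (\<lambda>x. A *v x + t) ` P"
  proof
    show "(\<lambda>x. A *v x + t) ` P \<subseteq> std_simplex"
    proof
      fix y assume "y \<in> (\<lambda>x. A *v x + t) ` P"
      then obtain x where x: "x \<in> P" "y = A *v x + t" by blast
      have "0 \<le> y $ i" for i
      proof -
        have "off (\<sigma> i) \<le> \<rho> (\<sigma> i) \<bullet> x" using facet_props(2)[OF SF_facet[OF m \<sigma>S] x(1)] .
        then show ?thesis using off_at_m[OF m \<sigma>S] unfolding x(2) ft by (simp add: inner_diff_right)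
      qed
      moreover have "(\<Sum>i\<in>UNIV. y $ i) \<le> 1"
        using sx x unfolding x(2) ft by (simp add: sS)
      ultimately show "y \<in> std_simplex" by (simp add: std_char)
    qed
  next
    show "std_simplex \<subseteq> (\<lambda>x. A *v x + t) ` P"
    proof
      fix y assume "y \<in> (std_simplex :: (real^'n) set)"
      then have nn: "\<forall>i. 0 \<le> y $ i" and s1: "(\<Sum>i\<in>UNIV. y $ i) \<le> 1" by (simp_all add: std_char)
      define x where "x = m + (\<Sum>i\<in>UNIV. y $ i *\<^sub>R uu m (\<sigma> i))"
      have fx: "A *v x + t = y"
      proof -
        have "(A *v x + t) $ k = y $ k" for k
        proof -
          have "(A *v x + t) $ k = (\<Sum>i\<in>UNIV. y $ i * (\<rho> (\<sigma> k) \<bullet> uu m (\<sigma> i)))"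
            unfolding ft by (simp add: x_def inner_sum_right)
          also have "\<dots> = (\<Sum>i\<in>UNIV. if i = k then y $ i else 0)"
            using dual[OF m \<sigma>S \<sigma>S] \<sigma>inj by (intro sum.cong) auto
          also have "\<dots> = y $ k" by simp
          finally show ?thesis .
        qed
        then show ?thesis by (simp add: vec_eq_iff)
      qed
      have xP: "x \<in> P"
      proof (cases "(\<Sum>i\<in>UNIV. y $ i) = 0")
        case True
        then have "\<forall>i\<in>UNIV. y $ i = 0" using nn sum_nonneg_eq_0_iff[of UNIV "\<lambda>i. y $ i"] by simp
        then have "x = m" by (simp add: x_def)
        then show ?thesis using m_in_P[OF m] by simp
      next
        case False
        define s where "s = (\<Sum>i\<in>UNIV. y $ i)"
        have "s \<ge> 0" using nn by (simp add: s_def sum_nonneg)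
        then have s0: "s > 0" using False by (simp add: s_def)
        define z where "z = (\<Sum>i\<in>UNIV. (y $ i / s) *\<^sub>R (m + uu m (\<sigma> i)))"
        have zP: "z \<in> P" unfolding z_def
        proof (rule convex_sum[OF finite convexP])
          show "(\<Sum>i\<in>UNIV. y $ i / s) = 1" using s0 by (simp add: s_def sum_divide_distrib[symmetric])
          show "\<And>i. i \<in> UNIV \<Longrightarrow> 0 \<le> y $ i / s" using nn s0 by simp
          show "\<And>i. i \<in> UNIV \<Longrightarrow> m + uu m (\<sigma> i) \<in> P" using edge[OF m \<sigma>S] by blast
        qed
        have "s *\<^sub>R z = (\<Sum>i\<in>UNIV. s *\<^sub>R ((y $ i / s) *\<^sub>R (m + uu m (\<sigma> i))))"
          by (simp add: z_def scaleR_sum_right)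
        also have "\<dots> = (\<Sum>i\<in>UNIV. y $ i *\<^sub>R m + y $ i *\<^sub>R uu m (\<sigma> i))"
          using s0 by (intro sum.cong) (auto simp: scaleR_add_right)
        also have "\<dots> = s *\<^sub>R m + (\<Sum>i\<in>UNIV. y $ i *\<^sub>R uu m (\<sigma> i))"
          by (simp add: sum.distrib s_def scaleR_sum_left)
        finally have "s *\<^sub>R z = s *\<^sub>R m + (\<Sum>i\<in>UNIV. y $ i *\<^sub>R uu m (\<sigma> i))" .
        then have "x = (1 - s) *\<^sub>R m + s *\<^sub>R z" by (simp add: x_def algebra_simps)
        moreover have "s \<le> 1" using s1 by (simp add: s_def)
        ultimately show ?thesis using convexD[OF convexP m_in_P[OF m] zP, of "1 - s" s] s0 by simp
      qed
      show "y \<in> (\<lambda>x. A *v x + t) ` P" using fx xP by blast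
    qed
  qed
  then show ?thesis unfolding lattice_equiv_def using AI detA tl by blast
qed


lemma uu_nz: "F \<in> SF m \<Longrightarrow> uu m F \<noteq> 0"
  using dual[OF m, of F F] by auto

lemma equiv_hull:
  assumes eq: "lattice_equiv P std_simplex"
  shows "P = convex hull (insert m ((\<lambda>F. m + uu m F) ` SF m))"
proof -
  obtain A :: "real^'n^'n" and t where AI: "\<forall>i j. A $ i $ j \<in> \<int>" and dA: "\<bar>det A\<bar> = 1"
    and tl: "t \<in> lattice_pts" and std: "std_simplex = (\<lambda>x. A *v x + t) ` P"
    using eq unfolding lattice_equiv_def by blast
  define f where "f = (\<lambda>x. A *v x + t)"
  have "invertible A" using dA invertible_det_nz[of A] by auto
  then have injA: "inj ((*v) A)" by (rule inj_matrix_vector_mult)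
  have injf: "inj f" using injA unfolding f_def inj_def by auto
  define L' where "L' = (\<lambda>F. m + uu m F) ` SF m"
  define L where "L = insert m L'"
  have LP: "L \<subseteq> P" using edge[OF m] m_in_P[OF m] by (auto simp: L_def L'_def)
  have Ll: "L \<subseteq> lattice_pts"
    using m_lattice[OF m] uu_lattice[OF m] by (auto simp: L_def L'_def intro: lattice_add)
  have fl: "f x \<in> lattice_pts" if "x \<in> lattice_pts" for x
  proof -
    have "(A *v x) $ i \<in> \<int>" for i
      using that AI by (auto simp: matrix_vector_mult_def lattice_pts_def intro!: Ints_sum Ints_mult)
    then have "A *v x \<in> lattice_pts" by (simp add: lattice_pts_def)
    then show ?thesis unfolding f_def using tl by (rule lattice_add)
  qed
  have fL: "f ` L \<subseteq> insert 0 Basis"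
  proof
    fix y assume "y \<in> f ` L"
    then obtain x where x: "x \<in> L" "y = f x" by blast
    have "y \<in> std_simplex" using x LP std unfolding f_def by blast
    moreover have "y \<in> lattice_pts" using x Ll fl by blast
    ultimately show "y \<in> insert 0 Basis" by (rule std_lattice)
  qed
  have finL': "finite L'" by (simp add: L'_def finite_SF)
  have inj': "inj_on (\<lambda>F. m + uu m F) (SF m)"
    using uu_inj by (auto simp: inj_on_def)
  have cL': "card L' = CARD('n)" unfolding L'_def using card_image[OF inj'] card_SF[OF m] by simp
  have mL': "m \<notin> L'" using uu_nz by (auto simp: L'_def)
  have cL: "card L = Suc CARD('n)" using cL' mL' finL' by (simp add: L_def)
  have "card (f ` L) = Suc CARD('n)"
    using cL card_image[of f L] injf by (simp add: inj_on_subset[OF injf])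
  then have fLeq: "f ` L = insert 0 Basis"
    using card_subset_eq[OF _ fL] card_insert_0_Basis by simp
  have hull_img: "f ` (convex hull S) = convex hull (f ` S)" for S
  proof -
    have "f ` (convex hull S) = (\<lambda>x. t + x) ` ((*v) A ` (convex hull S))"
      by (auto simp: f_def image_iff add.commute)
    also have "(*v) A ` (convex hull S) = convex hull ((*v) A ` S)"
      by (rule convex_hull_linear_image) simp
    also have "(\<lambda>x. t + x) ` (convex hull ((*v) A ` S)) = convex hull ((\<lambda>x. t + x) ` (*v) A ` S)"
      by (rule convex_hull_translation[symmetric])
    also have "(\<lambda>x. t + x) ` (*v) A ` S = f ` S" by (auto simp: f_def image_iff add.commute)
    finally show ?thesis .
  qed
  have "f ` P = f ` (convex hull L)"
    using std fLeq hull_img[of L] unfolding f_def std_simplex_def std_basis by simp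
  then show ?thesis using injf by (simp add: inj_image_eq_iff L_def L'_def)
qed

lemma equiv_bound:
  assumes eq: "lattice_equiv P std_simplex"
  shows "\<forall>x\<in>P. (\<Sum>F\<in>SF m. \<rho> F) \<bullet> x \<le> (\<Sum>F\<in>SF m. \<rho> F) \<bullet> m + 1"
proof -
  define w where "w = (\<Sum>F\<in>SF m. \<rho> F)"
  have wu: "w \<bullet> uu m G = 1" if G: "G \<in> SF m" for G
  proof -
    have "w \<bullet> uu m G = (\<Sum>F\<in>SF m. \<rho> F \<bullet> uu m G)" by (simp add: w_def inner_sum_left)
    also have "\<dots> = (\<Sum>F\<in>SF m. if F = G then 1 else 0)" using dual[OF m _ G] by (intro sum.cong) auto
    also have "\<dots> = 1" using G finite_SF[of m] by simp
    finally show ?thesis .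
  qed
  have "convex hull (insert m ((\<lambda>F. m + uu m F) ` SF m)) \<subseteq> {x. w \<bullet> x \<le> w \<bullet> m + 1}"
    by (rule hull_minimal) (auto simp: convex_halfspace_le inner_add_right wu)
  then show ?thesis using equiv_hull[OF eq] by (auto simp: w_def)
qed


lemma w_uu: "G \<in> SF m \<Longrightarrow> (\<Sum>F\<in>SF m. \<rho> F) \<bullet> uu m G = 1"
proof -
  assume G: "G \<in> SF m"
  have "(\<Sum>F\<in>SF m. \<rho> F) \<bullet> uu m G = (\<Sum>F\<in>SF m. \<rho> F \<bullet> uu m G)" by (simp add: inner_sum_left)
  also have "\<dots> = (\<Sum>F\<in>SF m. if F = G then 1 else 0)" using dual[OF m _ G] by (intro sum.cong) auto
  also have "\<dots> = 1" using G finite_SF[of m] by simp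
  finally show ?thesis .
qed

lemma SF_ne: "SF m \<noteq> {}"
  using card_SF[OF m] by auto

lemma sum_dual: "G \<in> SF m \<Longrightarrow> (\<Sum>F\<in>SF m. \<rho> G \<bullet> uu m F) = 1"
proof -
  assume G: "G \<in> SF m"
  have "(\<Sum>F\<in>SF m. \<rho> G \<bullet> uu m F) = (\<Sum>F\<in>SF m. if G = F then 1 else 0)"
    using dual[OF m G] by (intro sum.cong) auto
  also have "\<dots> = 1" using G finite_SF[of m] by simp
  finally show ?thesis .
qed

lemma equiv_facet:
  assumes eq: "lattice_equiv P std_simplex"
  shows "\<exists>G. G facet_of P \<and> \<rho> G = - (\<Sum>F\<in>SF m. \<rho> F) \<and> off G = - ((\<Sum>F\<in>SF m. \<rho> F) \<bullet> m) - 1"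
proof -
  define w where "w = (\<Sum>F\<in>SF m. \<rho> F)"
  define b0 where "b0 = w \<bullet> m + 1"
  define G where "G = P \<inter> {x. w \<bullet> x = b0}"
  have Ps: "P \<subseteq> {x. w \<bullet> x \<le> b0}" using equiv_bound[OF eq] by (auto simp: w_def b0_def)
  have face: "G face_of P" unfolding G_def
    using Ps by (intro face_of_Int_supporting_hyperplane_le[OF convexP]) auto
  obtain F0 where F0: "F0 \<in> SF m" using SF_ne by blast
  have wu: "w \<bullet> uu m F = 1" if "F \<in> SF m" for F using w_uu[OF that] by (simp add: w_def)
  have L'G: "(\<lambda>F. m + uu m F) ` SF m \<subseteq> G"
    using edge[OF m] wu by (auto simp: G_def b0_def inner_add_right)
  have Gne: "G \<noteq> {}" using L'G F0 by blast
  have mG: "m \<notin> G" by (simp add: G_def b0_def)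
  have "G \<noteq> P" using mG m_in_P[OF m] by blast
  then have lt: "aff_dim G < aff_dim P" using face_of_aff_dim_lt[OF convexP face] by blast
  have "aff_dim P = aff_dim (insert m ((\<lambda>F. m + uu m F) ` SF m))"
    using equiv_hull[OF eq] aff_dim_convex_hull by metis
  also have "\<dots> \<le> aff_dim ((\<lambda>F. m + uu m F) ` SF m) + 1"
    by (simp add: aff_dim_insert)
  also have "\<dots> \<le> aff_dim G + 1" using aff_dim_subset[OF L'G] by simp
  finally have ge: "aff_dim P \<le> aff_dim G + 1" .
  have Gf: "G facet_of P" unfolding facet_of_def using face Gne lt ge by simp
  have w0: "w \<noteq> 0" using wu[OF F0] by auto
  obtain \<mu> where \<mu>: "\<mu> > 0" and n: "\<rho> G = (-\<mu>) *\<^sub>R w" and o: "off G = -\<mu> * b0"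
    using normal_wrt[OF Gf w0 Ps G_def] by blast
  have wl: "w \<in> lattice_pts" unfolding w_def
    by (rule lattice_sum) (auto intro: rho_lattice[OF m] SF_facet[OF m])
  have pw: "primitive_vec (-w)"
    by (rule primitive_of_dual[OF lattice_uminus[OF wl] uu_lattice[OF m, of F0]]) (simp add: wu[OF F0])
  have "primitive_vec (\<mu> *\<^sub>R (-w))" using facet_props(1)[OF Gf] n by simp
  then have "\<mu> = 1" using primitive_unique_scale[OF pw _ \<mu>] by blast
  then show ?thesis using Gf n o by (intro exI[of _ G]) (simp add: w_def b0_def)
qed

lemma lower_bound:
  assumes eq: "lattice_equiv P std_simplex" and a: "a > 0"
    and x: "x \<in> shrink ((\<lambda>x. a *\<^sub>R x) ` P) b"
  shows "a \<ge> (real CARD('n) + 1) * b"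
proof -
  define w where "w = (\<Sum>F\<in>SF m. \<rho> F)"
  have all: "\<forall>F. F facet_of P \<longrightarrow> a * off F + b \<le> \<rho> F \<bullet> x" using x shrink_scale[OF a] by blast
  obtain G where G: "G facet_of P" "\<rho> G = - w" "off G = - (w \<bullet> m) - 1"
    using equiv_facet[OF eq] by (auto simp: w_def)
  have "a * off G + b \<le> \<rho> G \<bullet> x" using all G(1) by blast
  then have g: "a * (- (w \<bullet> m) - 1) + b \<le> - (w \<bullet> x)" unfolding G(2,3) by simp
  have "(\<Sum>F\<in>SF m. a * (\<rho> F \<bullet> m) + b) \<le> (\<Sum>F\<in>SF m. \<rho> F \<bullet> x)"
  proof (rule sum_mono)
    fix F assume F: "F \<in> SF m"
    show "a * (\<rho> F \<bullet> m) + b \<le> \<rho> F \<bullet> x" using all SF_facet[OF m F] off_at_m[OF m F] by simp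
  qed
  then have "a * (w \<bullet> m) + real CARD('n) * b \<le> w \<bullet> x"
    by (simp add: sum.distrib w_def inner_sum_left sum_distrib_left[symmetric] card_SF[OF m])
  then show ?thesis using g by (simp add: algebra_simps)
qed

end

end



context spoly
begin

lemma shrink_point:
  assumes m: "m extreme_point_of P" and k: "k \<ge> CARD('n)"
    and ne: "k = CARD('n) \<Longrightarrow> \<not> lattice_equiv P std_simplex"
  shows "real k *\<^sub>R m + (\<Sum>F\<in>SF m. uu m F) \<in> shrink ((\<lambda>x. real k *\<^sub>R x) ` P) 1"
proof -
  have kpos: "real k > 0" using k by (simp add: less_le_trans[of 0 "CARD('n)" k])
  show ?thesis unfolding shrink_scale[OF kpos]
  proof (intro allI impI)
    fix G assume G: "G facet_of P"
    show "real k * off G + 1 \<le> \<rho> G \<bullet> (real k *\<^sub>R m + (\<Sum>F\<in>SF m. uu m F))"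
    proof (cases "m \<in> G")
      case True
      then have GS: "G \<in> SF m" using G by (simp add: SF_def)
      have "\<rho> G \<bullet> (real k *\<^sub>R m + (\<Sum>F\<in>SF m. uu m F)) = real k * (\<rho> G \<bullet> m) + (\<Sum>F\<in>SF m. \<rho> G \<bullet> uu m F)"
        by (simp add: inner_add_right inner_sum_right)
      also have "\<dots> = real k * off G + 1" using off_at_m[OF m GS] sum_dual[OF m GS] by simp
      finally show ?thesis by simp
    next
      case False
      show ?thesis
      proof (rule disjE[OF vertex_ineq[OF m G False k]])
        assume "k = CARD('n) \<and> (\<forall>F\<in>SF m. \<rho> G \<bullet> uu m F = -(\<rho> G \<bullet> m - off G))"
        then have "lattice_equiv P std_simplex"
          using simplex_equiv[OF m simplex_case[OF m G False]] by blast
        then show ?thesis using ne \<open>k = CARD('n) \<and> _\<close> by blast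
      qed
    qed
  qed
qed

lemma spanned_k:
  assumes k: "k \<ge> CARD('n)" and ne: "k = CARD('n) \<Longrightarrow> \<not> lattice_equiv P std_simplex"
  shows "s_spanned ((\<lambda>x. real k *\<^sub>R x) ` P) 1"
proof -
  have kpos: "real k > 0" using k by (simp add: less_le_trans[of 0 "CARD('n)" k])
  show ?thesis unfolding spanned_scale[OF kpos]
  proof (intro allI impI)
    fix m x assume m: "m extreme_point_of P"
      and hx: "\<forall>F. F facet_of P \<and> m \<in> F \<longrightarrow> \<rho> F \<bullet> x = real k * off F + 1"
    have "x - real k *\<^sub>R m = (\<Sum>F\<in>SF m. (\<rho> F \<bullet> (x - real k *\<^sub>R m)) *\<^sub>R uu m F)"
      by (rule expand1[OF m])
    also have "\<dots> = (\<Sum>F\<in>SF m. uu m F)"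
    proof (rule sum.cong[OF refl])
      fix F assume F: "F \<in> SF m"
      have "\<rho> F \<bullet> x = real k * off F + 1" using hx F by (simp add: SF_def)
      then have "\<rho> F \<bullet> (x - real k *\<^sub>R m) = 1" using off_at_m[OF m F] by (simp add: inner_diff_right)
      then show "(\<rho> F \<bullet> (x - real k *\<^sub>R m)) *\<^sub>R uu m F = uu m F" by simp
    qed
    finally have "x = real k *\<^sub>R m + (\<Sum>F\<in>SF m. uu m F)" by (simp add: algebra_simps)
    then show "x \<in> shrink ((\<lambda>x. real k *\<^sub>R x) ` P) 1" using shrink_point[OF m k ne] by simp
  qed
qed

lemma vertex_exists: obtains m where "m extreme_point_of P"
  using extreme_point_exists_convex[OF compactP convexP P_ne] by blast

lemma spanned_nonempty:
  assumes a: "a > 0" and sp: "s_spanned ((\<lambda>x. a *\<^sub>R x) ` P) b"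
  shows "shrink ((\<lambda>x. a *\<^sub>R x) ` P) b \<noteq> {}"
proof -
  obtain m where m: "m extreme_point_of P" by (rule vertex_exists)
  define x where "x = a *\<^sub>R m + b *\<^sub>R (\<Sum>F\<in>SF m. uu m F)"
  have "\<forall>F. F facet_of P \<and> m \<in> F \<longrightarrow> \<rho> F \<bullet> x = a * off F + b"
  proof (intro allI impI)
    fix F assume "F facet_of P \<and> m \<in> F"
    then have F: "F \<in> SF m" by (simp add: SF_def)
    have "\<rho> F \<bullet> x = a * (\<rho> F \<bullet> m) + b * (\<Sum>G\<in>SF m. \<rho> F \<bullet> uu m G)"
      by (simp add: x_def inner_add_right inner_sum_right)
    then show "\<rho> F \<bullet> x = a * off F + b" using off_at_m[OF m F] sum_dual[OF m F] by simp
  qed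
  then have "x \<in> shrink ((\<lambda>x. a *\<^sub>R x) ` P) b" using sp m unfolding spanned_scale[OF a] by blast
  then show ?thesis by blast
qed

lemma lattice_point_exists:
  "shrink ((\<lambda>x. real (CARD('n) + 1) *\<^sub>R x) ` P) 1 \<inter> lattice_pts \<noteq> {}"
proof -
  obtain m where m: "m extreme_point_of P" by (rule vertex_exists)
  have "real (CARD('n) + 1) *\<^sub>R m + (\<Sum>F\<in>SF m. uu m F) \<in> shrink ((\<lambda>x. real (CARD('n) + 1) *\<^sub>R x) ` P) 1"
    by (rule shrink_point[OF m]) auto
  moreover have "real (CARD('n) + 1) *\<^sub>R m + (\<Sum>F\<in>SF m. uu m F) \<in> lattice_pts"
    by (intro lattice_add lattice_scale_nat m_lattice[OF m] lattice_sum uu_lattice[OF m])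
  ultimately show ?thesis by blast
qed

end


theorem corollary2p3:
  fixes P :: "(real^'n) set"
  assumes "lattice_polytope P" and "aff_dim P = int CARD('n)" and "smooth_polytope P"
  shows "((codeg P = CARD('n) + 1 \<and> codeg_Q P = real CARD('n) + 1 \<and> tau P = real CARD('n) + 1)
            \<longleftrightarrow> lattice_equiv P std_simplex)
     \<and> (\<not> lattice_equiv P std_simplex \<longrightarrow> codeg_Q P \<le> tau P \<and> tau P \<le> real CARD('n))"
proof -
  obtain V where V: "finite V" "V \<subseteq> lattice_pts" "P = convex hull V"
    using assms(1) unfolding lattice_polytope_def by blast
  interpret spoly P V
    by unfold_locales (use V assms(2,3) in auto)
  define X where "X = {real a / real b | a b::nat. a > 0 \<and> b > 0 \<and>
                    shrink ((\<lambda>x. real a *\<^sub>R x) ` P) (real b) \<noteq> {}}"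
  define Y where "Y = {real a / real b | a b::nat. a > 0 \<and> b > 0 \<and>
                    s_spanned ((\<lambda>x. real a *\<^sub>R x) ` P) (real b)}"
  have cQ: "codeg_Q P = Inf X" unfolding codeg_Q_def X_def ..
  have tQ: "tau P = Inf Y" unfolding tau_def Y_def ..
  have YX: "Y \<subseteq> X"
  proof
    fix z assume "z \<in> Y"
    then obtain a b :: nat where z: "z = real a / real b" "a > 0" "b > 0"
      and sp: "s_spanned ((\<lambda>x. real a *\<^sub>R x) ` P) (real b)" unfolding Y_def by blast
    have "shrink ((\<lambda>x. real a *\<^sub>R x) ` P) (real b) \<noteq> {}"
      using spanned_nonempty[OF _ sp] z(2) by simp
    then show "z \<in> X" unfolding X_def using z by blast
  qed
  have Xbdd: "bdd_below X" unfolding X_def by (rule bdd_belowI[of _ 0]) auto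
  have Ybdd: "bdd_below Y" unfolding Y_def by (rule bdd_belowI[of _ 0]) auto
  have memY: "real a / real b \<in> Y" if "a > 0" "b > 0" "s_spanned ((\<lambda>x. real a *\<^sub>R x) ` P) (real b)"
    for a b :: nat unfolding Y_def using that by blast
  have n1Y: "real CARD('n) + 1 \<in> Y"
  proof -
    have "s_spanned ((\<lambda>x. real (CARD('n) + 1) *\<^sub>R x) ` P) 1" by (rule spanned_k) auto
    then have "real (CARD('n) + 1) / real (1::nat) \<in> Y" by (intro memY) auto
    then show ?thesis by (simp add: add.commute)
  qed
  have Yne: "Y \<noteq> {}" using n1Y by blast
  have Xne: "X \<noteq> {}" using Yne YX by blast
  have tau_le: "tau P \<le> real CARD('n) + 1" unfolding tQ using n1Y Ybdd by (rule cInf_lower)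
  have cq_le: "codeg_Q P \<le> tau P" unfolding cQ tQ by (rule cInf_superset_mono[OF Yne Xbdd YX])
  have noneq: "tau P \<le> real CARD('n)" if ne: "\<not> lattice_equiv P std_simplex"
  proof -
    have "s_spanned ((\<lambda>x. real CARD('n) *\<^sub>R x) ` P) 1" by (rule spanned_k) (use ne in auto)
    then have "real CARD('n) / real (1::nat) \<in> Y" by (intro memY) auto
    then have "real CARD('n) \<in> Y" by simp
    then show ?thesis unfolding tQ using Ybdd by (rule cInf_lower)
  qed
  obtain m where m: "m extreme_point_of P" by (rule vertex_exists)
  have eqX: "real CARD('n) + 1 \<le> z" if eq: "lattice_equiv P std_simplex" and z: "z \<in> X" for z
  proof -
    obtain a b :: nat where zab: "z = real a / real b" "a > 0" "b > 0"
      and sh: "shrink ((\<lambda>x. real a *\<^sub>R x) ` P) (real b) \<noteq> {}" using z unfolding X_def by blast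
    obtain x where "x \<in> shrink ((\<lambda>x. real a *\<^sub>R x) ` P) (real b)" using sh by blast
    then have "real a \<ge> (real CARD('n) + 1) * real b"
      using lower_bound[OF m eq, of "real a" x "real b"] zab(2) by simp
    then show ?thesis using zab by (simp add: le_divide_eq)
  qed
  have eq_vals: "codeg P = CARD('n) + 1 \<and> codeg_Q P = real CARD('n) + 1 \<and> tau P = real CARD('n) + 1"
    if eq: "lattice_equiv P std_simplex"
  proof -
    have "real CARD('n) + 1 \<le> Inf X" using Xne eqX[OF eq] by (intro cInf_greatest) auto
    then have c1: "codeg_Q P = real CARD('n) + 1" using cq_le tau_le cQ by linarith
    have c2: "tau P = real CARD('n) + 1" using c1 cq_le tau_le by linarith
    have c3: "codeg P = CARD('n) + 1"
      unfolding codeg_def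
    proof (rule Least_equality)
      show "1 \<le> CARD('n) + 1 \<and> shrink ((\<lambda>x. real (CARD('n) + 1) *\<^sub>R x) ` P) 1 \<inter> lattice_pts \<noteq> {}"
        using lattice_point_exists by simp
      fix y assume y: "1 \<le> y \<and> shrink ((\<lambda>x. real y *\<^sub>R x) ` P) 1 \<inter> lattice_pts \<noteq> {}"
      then obtain x where "x \<in> shrink ((\<lambda>x. real y *\<^sub>R x) ` P) 1" by blast
      then have "real y \<ge> (real CARD('n) + 1) * 1"
        using lower_bound[OF m eq, of "real y" x 1] y by simp
      then have "real (CARD('n) + 1) \<le> real y" by simp
      then show "CARD('n) + 1 \<le> y" by (simp only: of_nat_le_iff)
    qed
    show ?thesis using c1 c2 c3 by blast
  qed
  have part1: "(codeg P = CARD('n) + 1 \<and> codeg_Q P = real CARD('n) + 1 \<and> tau P = real CARD('n) + 1)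
            \<longleftrightarrow> lattice_equiv P std_simplex"
  proof
    assume h: "codeg P = CARD('n) + 1 \<and> codeg_Q P = real CARD('n) + 1 \<and> tau P = real CARD('n) + 1"
    show "lattice_equiv P std_simplex"
    proof (rule ccontr)
      assume "\<not> lattice_equiv P std_simplex"
      then have "tau P \<le> real CARD('n)" by (rule noneq)
      then show False using h by simp
    qed
  next
    assume "lattice_equiv P std_simplex"
    then show "codeg P = CARD('n) + 1 \<and> codeg_Q P = real CARD('n) + 1 \<and> tau P = real CARD('n) + 1"
      by (rule eq_vals)
  qed
  have part2: "\<not> lattice_equiv P std_simplex \<longrightarrow> codeg_Q P \<le> tau P \<and> tau P \<le> real CARD('n)"
    using cq_le noneq by blast
  show ?thesis using part1 part2 by (rule conjI)
qed


end
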